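(* Let $\epsilon,\delta>0$ be small and let $\rho$ be harmonic in $\Omega_R\setminus\overline{D_{R0}}$ such that $\partial_\nu\rho=0$ on $(0,\infty)\times\{-1-\frac{\delta}{2},\,1+\frac{\delta}{2}\}$, $\rho=0$ on $\{0\}\times(-1-\frac{\delta}{2},1+\frac{\delta}{2})$, $\rho>0$ on $\partial D_{R0}$, and $\int_{\Omega_R\setminus\overline{D_{R0}}}|\nabla\rho|^2\,dx\,dy<\infty$. Then $\rho>0$ in $\Omega_R\setminus\overline{D_{R0}}$.
   Context: $\Omega_R=(0,\infty)\times(-1-\frac{\delta}{2},1+\frac{\delta}{2})$ and $D_{R0}$ is the open unit disk centered at $(1+\frac{\epsilon}{2},0)$. *)

theory Defs
  imports "HOL-Analysis.Analysis"
begin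

text \<open>Points of the plane are pairs (x,y) :: real \<times> real; the product norm is Euclidean.\<close>

definition part_x :: "(real \<times> real \<Rightarrow> real) \<Rightarrow> real \<times> real \<Rightarrow> real" where
  "part_x f p = frechet_derivative f (at p) (1, 0)"

definition part_y :: "(real \<times> real \<Rightarrow> real) \<Rightarrow> real \<times> real \<Rightarrow> real" where
  "part_y f p = frechet_derivative f (at p) (0, 1)"

definition harmonic_on :: "(real \<times> real \<Rightarrow> real) \<Rightarrow> (real \<times> real) set \<Rightarrow> bool" where
  "harmonic_on f U \<longleftrightarrow> open U \<and>
     (\<forall>p\<in>U. f differentiable (at p) \<and> part_x f differentiable (at p) \<and> part_y f differentiable (at p)) \<and>
     continuous_on U (part_x (part_x f)) \<and> continuous_on U (part_y (part_x f)) \<and>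
     continuous_on U (part_x (part_y f)) \<and> continuous_on U (part_y (part_y f)) \<and>
     (\<forall>p\<in>U. part_x (part_x f) p + part_y (part_y f) p = 0)"

definition grad_sq :: "(real \<times> real \<Rightarrow> real) \<Rightarrow> real \<times> real \<Rightarrow> real" where
  "grad_sq f p = (part_x f p)\<^sup>2 + (part_y f p)\<^sup>2"

definition Omega_R :: "real \<Rightarrow> (real \<times> real) set" where
  "Omega_R \<delta> = {0<..} \<times> {-1 - \<delta>/2 <..< 1 + \<delta>/2}"

text \<open>centre of D_R0: (1+\<epsilon>/2, 0); D_R0 = ball centre 1\<close>
definition cR0 :: "real \<Rightarrow> real \<times> real" where
  "cR0 \<epsilon> = (1 + \<epsilon>/2, 0)"

end

theory Submission
  imports Defs
begin


lemma partial_x_deriv: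
  assumes "f differentiable (at (x,y))"
  shows "((\<lambda>t. f (t,y)) has_real_derivative part_x f (x,y)) (at x)"
proof -
  have d: "(f has_derivative frechet_derivative f (at (x,y))) (at (x,y))"
    using assms frechet_derivative_works by blast
  have l: "linear (frechet_derivative f (at (x,y)))"
    using d has_derivative_linear by blast
  have "((\<lambda>t. (t,y)) has_derivative (\<lambda>h. (h,0))) (at x)"
    by (auto intro!: derivative_eq_intros)
  from diff_chain_at[OF this d] have
    "((\<lambda>t. f (t,y)) has_derivative (\<lambda>h. frechet_derivative f (at (x,y)) (h,0))) (at x)"
    by (simp add: o_def)
  moreover have "(\<lambda>h. frechet_derivative f (at (x,y)) (h,0)) = (\<lambda>h. part_x f (x,y) * h)"
  proof
    fix h :: real
    have "(h,0::real) = h *\<^sub>R (1,0)" by simp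
    then show "frechet_derivative f (at (x,y)) (h,0) = part_x f (x,y) * h"
      using linear_cmul[OF l, of h "(1,0)"] by (simp add: part_x_def)
  qed
  ultimately show ?thesis by (simp add: has_field_derivative_def)
qed

lemma partial_y_deriv:
  assumes "f differentiable (at (x,y))"
  shows "((\<lambda>t. f (x,t)) has_real_derivative part_y f (x,y)) (at y)"
proof -
  have d: "(f has_derivative frechet_derivative f (at (x,y))) (at (x,y))"
    using assms frechet_derivative_works by blast
  have l: "linear (frechet_derivative f (at (x,y)))"
    using d has_derivative_linear by blast
  have "((\<lambda>t. (x,t)) has_derivative (\<lambda>h. (0,h))) (at y)"
    by (auto intro!: derivative_eq_intros)
  from diff_chain_at[OF this d] have
    "((\<lambda>t. f (x,t)) has_derivative (\<lambda>h. frechet_derivative f (at (x,y)) (0,h))) (at y)"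
    by (simp add: o_def)
  moreover have "(\<lambda>h. frechet_derivative f (at (x,y)) (0,h)) = (\<lambda>h. part_y f (x,y) * h)"
  proof
    fix h :: real
    have "(0::real,h) = h *\<^sub>R (0,1)" by simp
    then show "frechet_derivative f (at (x,y)) (0,h) = part_y f (x,y) * h"
      using linear_cmul[OF l, of h "(0,1)"] by (simp add: part_y_def)
  qed
  ultimately show ?thesis by (simp add: has_field_derivative_def)
qed


lemma left_test:
  fixes g :: "real \<Rightarrow> real"
  assumes "(g has_real_derivative D) (at_left a)" "D > 0" "r > 0"
  shows "\<exists>t. a - r < t \<and> t < a \<and> g t < g a"
proof -
  obtain d where d: "d > 0" "\<forall>h>0. a - h \<in> {..<a} \<longrightarrow> h < d \<longrightarrow> g (a - h) < g a"
    using has_real_derivative_pos_inc_left[OF assms(1) assms(2)] by blast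
  define h where "h = min d r / 2"
  have "h > 0" "h < d" "h < r" using d assms by (auto simp: h_def)
  then show ?thesis using d(2) by (intro exI[of _ "a - h"]) auto
qed

lemma right_test:
  fixes g :: "real \<Rightarrow> real"
  assumes "(g has_real_derivative D) (at_right a)" "D < 0" "r > 0"
  shows "\<exists>t. a < t \<and> t < a + r \<and> g t < g a"
proof -
  obtain d where d: "d > 0" "\<forall>h>0. a + h \<in> {a<..} \<longrightarrow> h < d \<longrightarrow> g a > g (a + h)"
    using has_real_derivative_neg_dec_right[OF assms(1) assms(2)] by blast
  define h where "h = min d r / 2"
  have "h > 0" "h < d" "h < r" using d assms by (auto simp: h_def)
  then show ?thesis using d(2) by (intro exI[of _ "a + h"]) auto
qed

lemma second_test:
  fixes g g' :: "real \<Rightarrow> real"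
  assumes r: "r > 0" and dg: "\<forall>t\<in>ball a r. (g has_real_derivative g' t) (at t)"
    and d2: "(g' has_real_derivative d) (at a)" and dn: "d < 0"
  shows "\<exists>t\<in>ball a r. g t < g a"
proof -
  have ga: "(g has_real_derivative g' a) (at a)" using dg r by auto
  consider "g' a > 0" | "g' a < 0" | "g' a = 0" by linarith
  then show ?thesis
  proof cases
    case 1
    obtain e where e: "e > 0" "\<forall>h>0. h < e \<longrightarrow> g (a - h) < g a"
      using DERIV_pos_inc_left[OF ga 1] by blast
    define h where "h = min e r / 2"
    have "h > 0" "h < e" "h < r" using e r by (auto simp: h_def)
    then show ?thesis using e(2) by (intro bexI[of _ "a - h"]) (auto simp: dist_real_def)
  next
    case 2
    obtain e where e: "e > 0" "\<forall>h>0. h < e \<longrightarrow> g a > g (a + h)"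
      using DERIV_neg_dec_right[OF ga 2] by blast
    define h where "h = min e r / 2"
    have "h > 0" "h < e" "h < r" using e r by (auto simp: h_def)
    then show ?thesis using e(2) by (intro bexI[of _ "a + h"]) (auto simp: dist_real_def)
  next
    case 3
    obtain e where e: "e > 0" "\<forall>h>0. h < e \<longrightarrow> g' a > g' (a + h)"
      using DERIV_neg_dec_right[OF d2 dn] by blast
    define h where "h = min e r / 2"
    have h: "h > 0" "h < e" "h < r" using e r by (auto simp: h_def)
    have "\<forall>x. a \<le> x \<and> x \<le> a + h \<longrightarrow> (g has_real_derivative g' x) (at x)"
      using dg h by (auto simp: dist_real_def)
    then obtain z where z: "a < z" "z < a + h" "g (a + h) - g a = (a + h - a) * g' z"
      using MVT2[of a "a+h" g g'] h by auto
    have "g' z < 0" using e(2)[rule_format, of "z - a"] z h 3 by auto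
    then have "h * g' z < 0" using h(1) by (simp add: mult_pos_neg)
    then have "g (a + h) < g a" using z by simp
    then show ?thesis using h by (intro bexI[of _ "a + h"]) (auto simp: dist_real_def)
  qed
qed


lemma min_principle:
  fixes V :: "'a::topological_space \<Rightarrow> real"
  assumes "compact K" "continuous_on K V"
    and "\<forall>q\<in>K. V q < 0 \<longrightarrow> (\<exists>z\<in>K. V z < V q)"
  shows "\<forall>q\<in>K. V q \<ge> 0"
proof (cases "K = {}")
  case False
  then obtain q where q: "q \<in> K" "\<forall>y\<in>K. V q \<le> V y"
    using continuous_attains_inf[OF assms(1) False assms(2)] by blast
  have "V q \<ge> 0" using assms(3) q by force
  then show ?thesis using q by force
qed simp

lemma sqrt_gt1_iff: "1 < sqrt a \<longleftrightarrow> 1 < (a::real)"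
  by (metis real_sqrt_less_iff real_sqrt_one)

lemma sqrt_eq1_iff: "sqrt a = 1 \<longleftrightarrow> (a::real) = 1"
  by (metis real_sqrt_eq_iff real_sqrt_one)

locale setting =
  fixes \<epsilon> \<delta> :: real and \<rho> :: "real \<times> real \<Rightarrow> real"
  assumes eps: "\<epsilon> > 0" and del: "\<delta> > 0"
    and harm: "harmonic_on \<rho> (Omega_R \<delta> - closure (ball (cR0 \<epsilon>) 1))"
    and cont: "continuous_on ((Omega_R \<delta> - closure (ball (cR0 \<epsilon>) 1))
                  \<union> ({0} \<times> {-1 - \<delta>/2 <..< 1 + \<delta>/2})
                  \<union> ({0<..} \<times> {-1 - \<delta>/2, 1 + \<delta>/2})
                  \<union> frontier (ball (cR0 \<epsilon>) 1)) \<rho>"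
    and neumann: "\<forall>x>0. ((\<lambda>t. \<rho> (x, t)) has_real_derivative 0) (at_left (1 + \<delta>/2))
                      \<and> ((\<lambda>t. \<rho> (x, t)) has_real_derivative 0) (at_right (-1 - \<delta>/2))"
    and dirichlet: "\<forall>y\<in>{-1 - \<delta>/2 <..< 1 + \<delta>/2}. \<rho> (0, y) = 0"
    and pos_circle: "\<forall>p\<in>frontier (ball (cR0 \<epsilon>) 1). \<rho> p > 0"
    and energy: "grad_sq \<rho> integrable_on (Omega_R \<delta> - closure (ball (cR0 \<epsilon>) 1))"
begin

definition "T = 1 + \<delta>/2"
definition "cx = 1 + \<epsilon>/2"
definition "D = Omega_R \<delta> - closure (ball (cR0 \<epsilon>) 1)"
definition "S = D \<union> ({0} \<times> {-1 - \<delta>/2 <..< 1 + \<delta>/2})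
                  \<union> ({0<..} \<times> {-1 - \<delta>/2, 1 + \<delta>/2})
                  \<union> frontier (ball (cR0 \<epsilon>) 1)"

lemma T_gt1: "T > 1" using del by (simp add: T_def)
lemma cx_gt1: "cx > 1" using eps by (simp add: cx_def)

lemma dist_c: "dist (x,y) (cR0 \<epsilon>) = sqrt ((x - cx)\<^sup>2 + y\<^sup>2)"
  by (simp add: cR0_def cx_def dist_Pair_Pair dist_real_def)

lemma dist_c2: "dist (cR0 \<epsilon>) (x,y) = sqrt ((x - cx)\<^sup>2 + y\<^sup>2)"
  using dist_c[of x y] by (simp add: dist_commute)

lemma D_iff: "(x,y) \<in> D \<longleftrightarrow> x > 0 \<and> -T < y \<and> y < T \<and> (x - cx)\<^sup>2 + y\<^sup>2 > 1"
  unfolding D_def Omega_R_def T_def closure_ball[OF zero_less_one]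
  by (auto simp: mem_cball dist_c2 sqrt_gt1_iff not_le)

lemma sphere_iff: "(x,y) \<in> frontier (ball (cR0 \<epsilon>) 1) \<longleftrightarrow> (x - cx)\<^sup>2 + y\<^sup>2 = 1"
  by (simp add: dist_c2 sqrt_eq1_iff)

lemma S_iff: "(x,y) \<in> S \<longleftrightarrow> (x,y) \<in> D \<or> (x = 0 \<and> -T < y \<and> y < T) \<or> (x > 0 \<and> (y = -T \<or> y = T))
   \<or> (x - cx)\<^sup>2 + y\<^sup>2 = 1"
  unfolding S_def using sphere_iff[of x y] by (auto simp: T_def)

lemma cont_S: "continuous_on S \<rho>"
  using cont by (simp add: S_def D_def)

lemma open_D: "open D"
  using harm by (simp add: harmonic_on_def D_def)

lemma D_sub_S: "D \<subseteq> S" by (auto simp: S_def)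

lemma diffs:
  assumes "(x,y) \<in> D"
  shows "((\<lambda>t. \<rho> (t,y)) has_real_derivative part_x \<rho> (x,y)) (at x)"
    "((\<lambda>t. \<rho> (x,t)) has_real_derivative part_y \<rho> (x,y)) (at y)"
    "((\<lambda>t. part_x \<rho> (t,y)) has_real_derivative part_x (part_x \<rho>) (x,y)) (at x)"
    "((\<lambda>t. part_y \<rho> (x,t)) has_real_derivative part_y (part_y \<rho>) (x,y)) (at y)"
    "part_x (part_x \<rho>) (x,y) + part_y (part_y \<rho>) (x,y) = 0"
  using harm assms unfolding harmonic_on_def D_def
  by (auto intro!: partial_x_deriv partial_y_deriv)

lemma rho_diff: "p \<in> D \<Longrightarrow> \<rho> differentiable (at p)"
  using harm unfolding harmonic_on_def D_def by auto

lemma neu_top: "x > 0 \<Longrightarrow> ((\<lambda>t. \<rho> (x, t)) has_real_derivative 0) (at_left T)"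
  using neumann by (simp add: T_def)
lemma neu_bot: "x > 0 \<Longrightarrow> ((\<lambda>t. \<rho> (x, t)) has_real_derivative 0) (at_right (-T))"
  using neumann by (simp add: T_def)
lemma dir: "-T < y \<Longrightarrow> y < T \<Longrightarrow> \<rho> (0,y) = 0"
  using dirichlet by (simp add: T_def)
lemma circ: "(x - cx)\<^sup>2 + y\<^sup>2 = 1 \<Longrightarrow> \<rho> (x,y) > 0"
  using pos_circle sphere_iff by blast

end


context setting begin

lemma weak_core:
  fixes px py \<alpha> \<eta>1 \<eta>2 s1 h1 s2 h2 L :: real
  assumes pD: "(px,py) \<in> D" and al: "\<alpha> > 0" and e1: "\<eta>1 > 0" and e2: "\<eta>2 > 0"
    and s1: "0 < s1" "s1 < \<epsilon>/2" and h1: "0 < h1" "h1 < T - 1"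
    and s2: "0 < s2" "s2 < \<epsilon>/2" and h2: "0 < h2" "h2 < T - 1"
    and L: "px < L" "s1 < L" "s2 < L"
    and pK1: "s1 \<le> px \<or> py \<le> T - h1" and pK2: "s2 \<le> px \<or> -T + h2 \<le> py"
    and cut1: "\<And>x y. (x = s1 \<and> T - h1 \<le> y \<and> y \<le> T) \<or> (y = T - h1 \<and> 0 \<le> x \<and> x \<le> s1) \<Longrightarrow> \<rho> (x,y) \<ge> -\<alpha>"
    and cut2: "\<And>x y. (x = s2 \<and> -T \<le> y \<and> y \<le> -T + h2) \<or> (y = -T + h2 \<and> 0 \<le> x \<and> x \<le> s2) \<Longrightarrow> \<rho> (x,y) \<ge> -\<alpha>"
    and right: "\<And>y. -T \<le> y \<Longrightarrow> y \<le> T \<Longrightarrow> \<rho> (L,y) \<ge> -\<alpha> - \<eta>1 * L"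
  shows "\<rho> (px,py) \<ge> -\<alpha> - \<eta>1 * px - \<eta>2 * (py\<^sup>2 - 2*px\<^sup>2 + 2*L\<^sup>2)"
proof -
  have T1: "T > 1" by (rule T_gt1)
  have cx1: "cx = 1 + \<epsilon>/2" by (simp add: cx_def)
  define K where "K = {q. 0 \<le> fst q \<and> fst q \<le> L \<and> -T \<le> snd q \<and> snd q \<le> T \<and> 1 \<le> (fst q - cx)\<^sup>2 + (snd q)\<^sup>2
      \<and> (s1 \<le> fst q \<or> snd q \<le> T - h1) \<and> (s2 \<le> fst q \<or> -T + h2 \<le> snd q)}"
  define G where "G = (\<lambda>q::real\<times>real. \<alpha> + \<eta>1 * fst q + \<eta>2 * ((snd q)\<^sup>2 - 2*(fst q)\<^sup>2 + 2*L\<^sup>2))"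
  define V where "V = (\<lambda>q. \<rho> q + G q)"
  have Kmem: "(x,y) \<in> K \<longleftrightarrow> 0 \<le> x \<and> x \<le> L \<and> -T \<le> y \<and> y \<le> T \<and> 1 \<le> (x - cx)\<^sup>2 + y\<^sup>2
      \<and> (s1 \<le> x \<or> y \<le> T - h1) \<and> (s2 \<le> x \<or> -T + h2 \<le> y)" for x y
    by (simp add: K_def)
  have Kc: "compact K"
  proof -
    have "closed K" unfolding K_def
      by (intro closed_Collect_conj closed_Collect_disj closed_Collect_le continuous_intros)
    moreover have "K \<subseteq> cbox (0,-T) (L,T)"
    proof
      fix q assume "q \<in> K" then show "q \<in> cbox (0,-T) (L,T)"
        by (cases q) (simp add: Kmem)
    qed
    then have "bounded K" using bounded_cbox bounded_subset by blast
    ultimately show ?thesis using compact_eq_bounded_closed by blast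
  qed
  have KS: "K \<subseteq> S"
  proof
    fix q assume qK: "q \<in> K"
    obtain x y where q: "q = (x,y)" by (cases q)
    have k: "0 \<le> x" "x \<le> L" "-T \<le> y" "y \<le> T" "1 \<le> (x - cx)\<^sup>2 + y\<^sup>2"
      "s1 \<le> x \<or> y \<le> T - h1" "s2 \<le> x \<or> -T + h2 \<le> y" using qK q Kmem by auto
    have "(x,y) \<in> S"
    proof (cases "(x - cx)\<^sup>2 + y\<^sup>2 = 1")
      case True then show ?thesis by (simp add: S_iff)
    next
      case False
      show ?thesis
      proof (cases "x = 0")
        case True
        then show ?thesis using k s1 s2 h1 h2 by (auto simp: S_iff)
      next
        case False
        then show ?thesis using k \<open>(x - cx)\<^sup>2 + y\<^sup>2 \<noteq> 1\<close> by (auto simp: S_iff D_iff)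
      qed
    qed
    then show "q \<in> S" using q by simp
  qed
  have Gge: "G (x,y) \<ge> \<alpha> + \<eta>1 * x" if "0 \<le> x" "x \<le> L" for x y
  proof -
    have "x\<^sup>2 \<le> L\<^sup>2" using that by (simp add: power_mono)
    then have "0 \<le> y\<^sup>2 - 2*x\<^sup>2 + 2*L\<^sup>2" by (smt (verit) zero_le_power2)
    then show ?thesis using e2 by (simp add: G_def)
  qed
  have contV: "continuous_on K V"
    unfolding V_def G_def
    by (intro continuous_intros continuous_on_subset[OF cont_S KS])
  have key: "\<forall>q\<in>K. V q < 0 \<longrightarrow> (\<exists>z\<in>K. V z < V q)"
  proof (intro ballI impI)
    fix q assume qK: "q \<in> K" and Vq: "V q < 0"
    obtain x y where q: "q = (x,y)" by (cases q)
    have k: "0 \<le> x" "x \<le> L" "-T \<le> y" "y \<le> T" "1 \<le> (x - cx)\<^sup>2 + y\<^sup>2"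
      "s1 \<le> x \<or> y \<le> T - h1" "s2 \<le> x \<or> -T + h2 \<le> y" using qK q Kmem by auto
    have Gq: "G (x,y) \<ge> \<alpha> + \<eta>1 * x" using Gge k by auto
    have rq: "\<rho> (x,y) < - \<alpha> - \<eta>1 * x" using Vq Gq q by (simp add: V_def)
    have x0: "x \<noteq> 0"
    proof
      assume "x = 0"
      then have "-T < y" "y < T" using k s1 s2 h1 h2 by auto
      then have "\<rho> (x,y) = 0" using dir \<open>x = 0\<close> by simp
      then show False using rq \<open>x = 0\<close> al by simp
    qed
    have xL: "x \<noteq> L"
    proof
      assume "x = L"
      then show False using right[OF k(3) k(4)] rq by simp
    qed
    have ci: "(x - cx)\<^sup>2 + y\<^sup>2 \<noteq> 1"
      using circ[of x y] rq al e1 k(1) by (smt (verit) mult_nonneg_nonneg)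
    have c1: "\<not> ((x = s1 \<and> T - h1 \<le> y \<and> y \<le> T) \<or> (y = T - h1 \<and> 0 \<le> x \<and> x \<le> s1))"
      using cut1[of x y] rq e1 k(1) by (smt (verit) mult_nonneg_nonneg)
    have c2: "\<not> ((x = s2 \<and> -T \<le> y \<and> y \<le> -T + h2) \<or> (y = -T + h2 \<and> 0 \<le> x \<and> x \<le> s2))"
      using cut2[of x y] rq e1 k(1) by (smt (verit) mult_nonneg_nonneg)
    have xpos: "0 < x" "x < L" using x0 xL k by auto
    consider "y = T" | "y = -T" | "-T < y \<and> y < T" using k by linarith
    then show "\<exists>z\<in>K. V z < V q"
    proof cases
      case 1
      have xs1: "s1 < x" using k(6) c1 1 h1 by auto
      have dG: "((\<lambda>t. G (x,t)) has_real_derivative \<eta>2 * (2*T)) (at T)"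
        unfolding G_def by (auto intro!: derivative_eq_intros)
      have dV: "((\<lambda>t. V (x,t)) has_real_derivative 0 + \<eta>2 * (2*T)) (at_left T)"
        unfolding V_def
        by (intro DERIV_add neu_top xpos has_field_derivative_at_within[OF dG])
      have pD: "0 < 0 + \<eta>2 * (2*T)" using e2 T1 by simp
      obtain t where t: "T - (T - 1) < t" "t < T" "V (x,t) < V (x,T)"
        using left_test[OF dV pD, of "T - 1"] T1 by auto
      have "(x,t) \<in> K"
      proof -
        have "1 \<le> t\<^sup>2" using t(1) by (simp add: one_le_power)
        then have "1 \<le> (x - cx)\<^sup>2 + t\<^sup>2" by (smt (verit) zero_le_power2)
        then show ?thesis using Kmem xpos xs1 t h2 T1 by auto
      qed
      then show ?thesis using t q 1 by auto
    next
      case 2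
      have xs2: "s2 < x" using k(7) c2 2 h2 by auto
      have dG: "((\<lambda>t. G (x,t)) has_real_derivative \<eta>2 * (2*(-T))) (at (-T))"
        unfolding G_def by (auto intro!: derivative_eq_intros)
      have dV: "((\<lambda>t. V (x,t)) has_real_derivative 0 + \<eta>2 * (2*(-T))) (at_right (-T))"
        unfolding V_def
        by (intro DERIV_add neu_bot xpos has_field_derivative_at_within[OF dG])
      have nD: "0 + \<eta>2 * (2*(-T)) < 0" using e2 T1 by (simp add: mult_pos_neg)
      obtain t where t: "-T < t" "t < -T + (T - 1)" "V (x,t) < V (x,-T)"
        using right_test[OF dV nD, of "T - 1"] T1 by auto
      have "(x,t) \<in> K"
      proof -
        have "1 \<le> (-t)\<^sup>2" using t(2) by (intro one_le_power) simp
        then have "1 \<le> (x - cx)\<^sup>2 + t\<^sup>2" by (smt (verit) zero_le_power2 power2_minus)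
        then show ?thesis using Kmem xpos xs2 t h1 T1 by auto
      qed
      then show ?thesis using t q 2 by auto
    next
      case 3
      define U where "U = {q. 0 < fst q \<and> fst q < L \<and> -T < snd q \<and> snd q < T \<and> 1 < (fst q - cx)\<^sup>2 + (snd q)\<^sup>2
        \<and> (s1 < fst q \<or> snd q < T - h1) \<and> (s2 < fst q \<or> -T + h2 < snd q)}"
      have oU: "open U" unfolding U_def
        by (intro open_Collect_conj open_Collect_disj open_Collect_less continuous_intros)
      have qU: "q \<in> U" using q 3 xpos ci c1 c2 k by (auto simp: U_def)
      have UK: "U \<subseteq> K" by (auto simp: U_def K_def)
      have UD: "U \<subseteq> D" by (auto simp: U_def D_iff)
      obtain r where r: "r > 0" "ball q r \<subseteq> U" using oU qU open_contains_ball by blast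
      have lap: "part_x (part_x \<rho>) (x,y) + part_y (part_y \<rho>) (x,y) = 0"
        using diffs(5) UD qU q by blast
      have qD: "(x,y) \<in> D" using UD qU q by blast
      have inx: "(t,y) \<in> U" if "t \<in> ball x r" for t
        using r that q by (auto simp: dist_Pair_Pair dist_real_def dist_commute intro!: subsetD[OF r(2)])
      have iny: "(x,t) \<in> U" if "t \<in> ball y r" for t
        using r that q by (auto simp: dist_Pair_Pair dist_real_def dist_commute intro!: subsetD[OF r(2)])
      consider "part_x (part_x \<rho>) (x,y) - 4*\<eta>2 < 0" | "part_y (part_y \<rho>) (x,y) + 2*\<eta>2 < 0"
        using lap e2 by linarith
      then show ?thesis
      proof cases
        case 1
        have d1: "\<forall>t\<in>ball x r. ((\<lambda>t. V (t,y)) has_real_derivative (part_x \<rho> (t,y) + (\<eta>1 - 4*\<eta>2*t))) (at t)"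
        proof
          fix t assume "t \<in> ball x r"
          then have "(t,y) \<in> D" using inx UD by blast
          then show "((\<lambda>t. V (t,y)) has_real_derivative (part_x \<rho> (t,y) + (\<eta>1 - 4*\<eta>2*t))) (at t)"
            unfolding V_def G_def using diffs(1)
            by (auto intro!: derivative_eq_intros)
        qed
        have d2: "((\<lambda>t. part_x \<rho> (t,y) + (\<eta>1 - 4*\<eta>2*t)) has_real_derivative
              (part_x (part_x \<rho>) (x,y) - 4*\<eta>2)) (at x)"
          using diffs(3)[OF qD] by (auto intro!: derivative_eq_intros)
        obtain t where "t \<in> ball x r" "V (t,y) < V (x,y)"
          using second_test[OF r(1) d1 d2 1] by blast
        then show ?thesis using inx UK q by blast
      next
        case 2
        have d1: "\<forall>t\<in>ball y r. ((\<lambda>t. V (x,t)) has_real_derivative (part_y \<rho> (x,t) + 2*\<eta>2*t)) (at t)"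
        proof
          fix t assume "t \<in> ball y r"
          then have "(x,t) \<in> D" using iny UD by blast
          then show "((\<lambda>t. V (x,t)) has_real_derivative (part_y \<rho> (x,t) + 2*\<eta>2*t)) (at t)"
            unfolding V_def G_def using diffs(2)
            by (auto intro!: derivative_eq_intros)
        qed
        have d2: "((\<lambda>t. part_y \<rho> (x,t) + 2*\<eta>2*t) has_real_derivative
              (part_y (part_y \<rho>) (x,y) + 2*\<eta>2)) (at y)"
          using diffs(4)[OF qD] by (auto intro!: derivative_eq_intros)
        obtain t where "t \<in> ball y r" "V (x,t) < V (x,y)"
          using second_test[OF r(1) d1 d2 2] by blast
        then show ?thesis using iny UK q by blast
      qed
    qed
  qed
  have pK: "(px,py) \<in> K"
  proof -
    have "(px,py) \<in> S" using pD D_sub_S by blast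
    have "1 < (px - cx)\<^sup>2 + py\<^sup>2" "0 < px" "-T < py" "py < T" using pD D_iff by auto
    then show ?thesis using Kmem pK1 pK2 L by auto
  qed
  have "V (px,py) \<ge> 0" using min_principle[OF Kc contV key] pK by blast
  then show ?thesis by (simp add: V_def G_def algebra_simps)
qed

end


lemma L1D:
  fixes g g' :: "real \<Rightarrow> real"
  assumes ab: "a \<le> b" and gc: "continuous_on {a..b} g"
    and gd: "\<forall>t\<in>{a<..<b}. (g has_real_derivative g' t) (at t)"
    and g'c: "continuous_on {a<..<b} g'"
    and I: "(\<integral>\<^sup>+t. ennreal ((g' t)\<^sup>2) * indicator {a<..<b} t \<partial>lborel) \<le> ennreal M" and M0: "0 \<le> M"
  shows "\<bar>g b - g a\<bar> \<le> sqrt ((b-a)*M)"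
proof -
  have ftc: "(g' has_integral (g b - g a)) {a<..<b}"
    unfolding has_integral_Icc_iff_Ioo[symmetric]
    by (rule fundamental_theorem_of_calculus_interior[OF ab gc])
       (use gd in \<open>auto simp: has_real_derivative_iff_has_vector_derivative\<close>)
  have meas: "(\<lambda>t. indicator {a<..<b} t *\<^sub>R (g' t)\<^sup>2) \<in> borel_measurable borel"
    by (intro borel_measurable_continuous_on_indicator continuous_intros g'c) auto
  have eqi: "(\<integral>\<^sup>+t. ennreal (indicator {a<..<b} t * (g' t)\<^sup>2) \<partial>lborel)
      = (\<integral>\<^sup>+t. ennreal ((g' t)\<^sup>2) * indicator {a<..<b} t \<partial>lborel)"
    by (intro nn_integral_cong) (auto simp: indicator_def)
  have fin: "(\<integral>\<^sup>+t. ennreal (indicator {a<..<b} t * (g' t)\<^sup>2) \<partial>lborel) < \<infinity>"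
    using I eqi by (simp add: le_less_trans)
  have intU: "(\<lambda>t. indicator {a<..<b} t * (g' t)\<^sup>2) integrable_on UNIV"
    using nn_integral_integrable_on[of "\<lambda>t. indicator {a<..<b} t * (g' t)\<^sup>2"] meas fin by auto
  have eqf: "(\<lambda>t. indicator {a<..<b} t * (g' t)\<^sup>2) = (\<lambda>t. if t \<in> {a<..<b} then (g' t)\<^sup>2 else 0)"
    by (auto simp: indicator_def)
  have int2: "(\<lambda>t. (g' t)\<^sup>2) integrable_on {a<..<b}"
    using intU unfolding eqf integrable_restrict_UNIV .
  have iu: "integral UNIV (\<lambda>t. indicator {a<..<b} t * (g' t)\<^sup>2) = integral {a<..<b} (\<lambda>t. (g' t)\<^sup>2)"
    unfolding eqf by (rule integral_restrict_UNIV)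
  have "(\<integral>\<^sup>+t. ennreal (indicator {a<..<b} t * (g' t)\<^sup>2) \<partial>lborel) = integral UNIV (\<lambda>t. indicator {a<..<b} t * (g' t)\<^sup>2)"
    by (rule nn_integral_lborel_eq_integral) (use meas fin in auto)
  then have "ennreal (integral {a<..<b} (\<lambda>t. (g' t)\<^sup>2)) = (\<integral>\<^sup>+t. ennreal (indicator {a<..<b} t * (g' t)\<^sup>2) \<partial>lborel)"
    by (simp only: iu)
  then have I2: "integral {a<..<b} (\<lambda>t. (g' t)\<^sup>2) \<le> M"
    using I eqi M0 by (metis ennreal_le_iff)
  have bound: "\<bar>g b - g a\<bar> \<le> M / (2*l) + l * (b - a) / 2" if l: "l > 0" for l
  proof -
    have ic: "((\<lambda>t. l/2) has_integral ((b - a) * (l/2))) {a<..<b}"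
      using has_integral_const_real[of "l/2" a b] ab
      unfolding has_integral_Icc_iff_Ioo by (simp add: content_real)
    have ih: "((\<lambda>t. (g' t)\<^sup>2 / (2*l) + l/2) has_integral
        (integral {a<..<b} (\<lambda>t. (g' t)\<^sup>2) / (2*l) + (b - a) * (l/2))) {a<..<b}"
      by (intro has_integral_add ic has_integral_divide) (use int2 in \<open>simp add: has_integral_integral\<close>)
    have "norm (integral {a<..<b} g') \<le> integral {a<..<b} (\<lambda>t. (g' t)\<^sup>2 / (2*l) + l/2)"
    proof (rule integral_norm_bound_integral)
      show "g' integrable_on {a<..<b}" using ftc by blast
      show "(\<lambda>t. (g' t)\<^sup>2 / (2*l) + l/2) integrable_on {a<..<b}" using ih by blast
      fix t
      have "0 \<le> (\<bar>g' t\<bar> - l)\<^sup>2" by simp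
      then have "2 * l * \<bar>g' t\<bar> \<le> (g' t)\<^sup>2 + l\<^sup>2"
        by (simp add: power2_eq_square algebra_simps)
      then show "norm (g' t) \<le> (g' t)\<^sup>2 / (2*l) + l/2"
        using l by (simp add: field_simps power2_eq_square)
    qed
    also have "\<dots> = integral {a<..<b} (\<lambda>t. (g' t)\<^sup>2) / (2*l) + (b - a) * (l/2)"
      using ih by (rule integral_unique)
    also have "\<dots> \<le> M / (2*l) + l * (b - a) / 2"
      using divide_right_mono[OF I2, of "2*l"] l by (simp add: mult.commute)
    finally show ?thesis using integral_unique[OF ftc] by simp
  qed
  show ?thesis
  proof (cases "M = 0 \<or> a = b")
    case True
    show ?thesis
    proof (rule ccontr)
      assume "\<not> ?thesis"
      moreover have "0 \<le> sqrt ((b-a)*M)" using ab M0 by simp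
      ultimately have pos: "\<bar>g b - g a\<bar> > 0" by linarith
      show False
      proof (cases "a = b")
        case True then show False using pos by simp
      next
        case False
        then have M: "M = 0" and ba: "b - a > 0" using True ab by auto
        define l where "l = \<bar>g b - g a\<bar> / (b - a)"
        have "l > 0" using pos ba by (simp add: l_def)
        from bound[OF this] have "\<bar>g b - g a\<bar> \<le> \<bar>g b - g a\<bar> / 2"
          using ba M by (simp add: l_def)
        then show False using pos by simp
      qed
    qed
  next
    case False
    then have Mp: "M > 0" and ba: "b - a > 0" using M0 ab by auto
    define s where "s = sqrt (M / (b - a))"
    have sp: "s > 0" using Mp ba by (simp add: s_def)
    have s2: "s\<^sup>2 = M / (b - a)" using Mp ba by (simp add: s_def)
    have Ms: "M = s\<^sup>2 * (b - a)" using s2 ba by (simp add: field_simps)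
    have sq: "sqrt ((b - a) * M) = s * (b - a)"
    proof -
      have "(b - a) * M = (s * (b - a))\<^sup>2" unfolding Ms by (simp add: power2_eq_square)
      then show ?thesis using sp ba by simp
    qed
    have "M / (2 * s) + s * (b - a) / 2 = s * (b - a)"
      using sp unfolding Ms by (simp add: power2_eq_square field_simps)
    then show ?thesis using bound[OF sp] sq by linarith
  qed
qed

lemma L1D_sub:
  fixes g g' :: "real \<Rightarrow> real"
  assumes ab: "a \<le> b" and gc: "continuous_on {a..b} g"
    and gd: "\<forall>t\<in>{a<..<b}. (g has_real_derivative g' t) (at t)"
    and g'c: "continuous_on {a<..<b} g'"
    and I: "(\<integral>\<^sup>+t. ennreal ((g' t)\<^sup>2) * indicator {a<..<b} t \<partial>lborel) \<le> ennreal M" and M0: "0 \<le> M"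
    and uv: "a \<le> u" "u \<le> v" "v \<le> b"
  shows "\<bar>g v - g u\<bar> \<le> sqrt ((b-a)*M)"
proof -
  have "\<bar>g v - g u\<bar> \<le> sqrt ((v-u)*M)"
  proof (rule L1D)
    show "continuous_on {u..v} g" by (rule continuous_on_subset[OF gc]) (use uv in auto)
    show "\<forall>t\<in>{u<..<v}. (g has_real_derivative g' t) (at t)" using gd uv by auto
    show "continuous_on {u<..<v} g'" by (rule continuous_on_subset[OF g'c]) (use uv in auto)
    have "(\<integral>\<^sup>+t. ennreal ((g' t)\<^sup>2) * indicator {u<..<v} t \<partial>lborel)
        \<le> (\<integral>\<^sup>+t. ennreal ((g' t)\<^sup>2) * indicator {a<..<b} t \<partial>lborel)"
      using uv by (intro nn_integral_mono) (auto simp: indicator_def)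
    then show "(\<integral>\<^sup>+t. ennreal ((g' t)\<^sup>2) * indicator {u<..<v} t \<partial>lborel) \<le> ennreal M"
      using I by simp
  qed (use uv M0 in auto)
  also have "\<dots> \<le> sqrt ((b-a)*M)" using uv M0 by (intro real_sqrt_le_mono mult_right_mono) auto
  finally show ?thesis .
qed

lemma tonelli2:
  fixes g :: "real \<times> real \<Rightarrow> ennreal"
  assumes "g \<in> borel_measurable borel"
  shows "(\<integral>\<^sup>+x. \<integral>\<^sup>+y. g (x,y) \<partial>lborel \<partial>lborel) = (\<integral>\<^sup>+p. g p \<partial>lborel)"
    and "(\<integral>\<^sup>+y. \<integral>\<^sup>+x. g (x,y) \<partial>lborel \<partial>lborel) = (\<integral>\<^sup>+p. g p \<partial>lborel)"
proof -
  have m: "g \<in> borel_measurable (lborel \<Otimes>\<^sub>M lborel)"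
    using assms by (simp add: lborel_prod)
  show "(\<integral>\<^sup>+x. \<integral>\<^sup>+y. g (x,y) \<partial>lborel \<partial>lborel) = (\<integral>\<^sup>+p. g p \<partial>lborel)"
    using lborel.nn_integral_fst[OF m] by (simp add: lborel_prod)
  show "(\<integral>\<^sup>+y. \<integral>\<^sup>+x. g (x,y) \<partial>lborel \<partial>lborel) = (\<integral>\<^sup>+p. g p \<partial>lborel)"
    using lborel_pair.nn_integral_snd[OF m] by (simp add: lborel_prod)
qed


lemma avg_x:
  fixes f :: "real \<times> real \<Rightarrow> ennreal"
  assumes f: "f \<in> borel_measurable borel" and ab: "a < b"
    and E: "(\<integral>\<^sup>+p. f p * indicator ({a<..<b} \<times> {c<..<d}) p \<partial>lborel) \<le> ennreal E"
    and E0: "0 \<le> E" and k: "E < k * (b - a)"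
  shows "\<exists>x\<in>{a<..<b}. (\<integral>\<^sup>+y. f (x,y) * indicator {c<..<d} y \<partial>lborel) \<le> ennreal k"
proof (rule ccontr)
  assume "\<not> ?thesis"
  then have lt: "\<And>x. x \<in> {a<..<b} \<Longrightarrow> ennreal k \<le> (\<integral>\<^sup>+y. f (x,y) * indicator {c<..<d} y \<partial>lborel)"
    by (auto simp: not_le less_imp_le)
  have k0: "k > 0" using E0 k ab by (smt (verit) mult_nonpos_nonneg)
  have mx: "(\<lambda>y. f (x,y) * indicator {c<..<d} y) \<in> borel_measurable lborel" for x
    using f by measurable
  have "ennreal (k * (b - a)) = (\<integral>\<^sup>+x. ennreal k * indicator {a<..<b} x \<partial>lborel)"
    using ab k0 by (simp add: nn_integral_cmult_indicator ennreal_mult)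
  also have "\<dots> \<le> (\<integral>\<^sup>+x. (\<integral>\<^sup>+y. f (x,y) * indicator {c<..<d} y \<partial>lborel) * indicator {a<..<b} x \<partial>lborel)"
  proof (intro nn_integral_mono)
    fix x show "ennreal k * indicator {a<..<b} x \<le> (\<integral>\<^sup>+y. f (x,y) * indicator {c<..<d} y \<partial>lborel) * indicator {a<..<b} x"
      using lt[of x] by (cases "x \<in> {a<..<b}") simp_all
  qed
  also have "\<dots> = (\<integral>\<^sup>+x. \<integral>\<^sup>+y. f (x,y) * indicator ({a<..<b} \<times> {c<..<d}) (x,y) \<partial>lborel \<partial>lborel)"
  proof (intro nn_integral_cong)
    fix x
    have "(\<integral>\<^sup>+y. f (x,y) * indicator {c<..<d} y \<partial>lborel) * indicator {a<..<b} x
        = (\<integral>\<^sup>+y. f (x,y) * indicator {c<..<d} y * indicator {a<..<b} x \<partial>lborel)"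
      by (rule nn_integral_multc[symmetric]) (rule mx)
    also have "\<dots> = (\<integral>\<^sup>+y. f (x,y) * indicator ({a<..<b} \<times> {c<..<d}) (x,y) \<partial>lborel)"
      by (intro nn_integral_cong) (auto simp: indicator_def)
    finally show "(\<integral>\<^sup>+y. f (x,y) * indicator {c<..<d} y \<partial>lborel) * indicator {a<..<b} x
        = (\<integral>\<^sup>+y. f (x,y) * indicator ({a<..<b} \<times> {c<..<d}) (x,y) \<partial>lborel)" .
  qed
  also have "\<dots> = (\<integral>\<^sup>+p. f p * indicator ({a<..<b} \<times> {c<..<d}) p \<partial>lborel)"
  proof (rule tonelli2(1))
    show "(\<lambda>p. f p * indicator ({a<..<b} \<times> {c<..<d}) p) \<in> borel_measurable borel"
      by (intro borel_measurable_times_ennreal f borel_measurable_indicator borel_open open_Times) auto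
  qed
  also have "\<dots> \<le> ennreal E" by (rule E)
  finally have "k * (b - a) \<le> E" using E0 by simp
  then show False using k by simp
qed

lemma avg_y:
  fixes f :: "real \<times> real \<Rightarrow> ennreal"
  assumes f: "f \<in> borel_measurable borel" and cd: "c < d"
    and E: "(\<integral>\<^sup>+p. f p * indicator ({a<..<b} \<times> {c<..<d}) p \<partial>lborel) \<le> ennreal E"
    and E0: "0 \<le> E" and k: "E < k * (d - c)"
  shows "\<exists>y\<in>{c<..<d}. (\<integral>\<^sup>+x. f (x,y) * indicator {a<..<b} x \<partial>lborel) \<le> ennreal k"
proof (rule ccontr)
  assume "\<not> ?thesis"
  then have lt: "\<And>y. y \<in> {c<..<d} \<Longrightarrow> ennreal k \<le> (\<integral>\<^sup>+x. f (x,y) * indicator {a<..<b} x \<partial>lborel)"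
    by (auto simp: not_le less_imp_le)
  have k0: "k > 0" using E0 k cd by (smt (verit) mult_nonpos_nonneg)
  have mx: "(\<lambda>x. f (x,y) * indicator {a<..<b} x) \<in> borel_measurable lborel" for y
    using f by measurable
  have "ennreal (k * (d - c)) = (\<integral>\<^sup>+y. ennreal k * indicator {c<..<d} y \<partial>lborel)"
    using cd k0 by (simp add: nn_integral_cmult_indicator ennreal_mult)
  also have "\<dots> \<le> (\<integral>\<^sup>+y. (\<integral>\<^sup>+x. f (x,y) * indicator {a<..<b} x \<partial>lborel) * indicator {c<..<d} y \<partial>lborel)"
  proof (intro nn_integral_mono)
    fix y show "ennreal k * indicator {c<..<d} y \<le> (\<integral>\<^sup>+x. f (x,y) * indicator {a<..<b} x \<partial>lborel) * indicator {c<..<d} y"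
      using lt[of y] by (cases "y \<in> {c<..<d}") simp_all
  qed
  also have "\<dots> = (\<integral>\<^sup>+y. \<integral>\<^sup>+x. f (x,y) * indicator ({a<..<b} \<times> {c<..<d}) (x,y) \<partial>lborel \<partial>lborel)"
  proof (intro nn_integral_cong)
    fix y
    have "(\<integral>\<^sup>+x. f (x,y) * indicator {a<..<b} x \<partial>lborel) * indicator {c<..<d} y
        = (\<integral>\<^sup>+x. f (x,y) * indicator {a<..<b} x * indicator {c<..<d} y \<partial>lborel)"
      by (rule nn_integral_multc[symmetric]) (rule mx)
    also have "\<dots> = (\<integral>\<^sup>+x. f (x,y) * indicator ({a<..<b} \<times> {c<..<d}) (x,y) \<partial>lborel)"
      by (intro nn_integral_cong) (auto simp: indicator_def)
    finally show "(\<integral>\<^sup>+x. f (x,y) * indicator {a<..<b} x \<partial>lborel) * indicator {c<..<d} y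
        = (\<integral>\<^sup>+x. f (x,y) * indicator ({a<..<b} \<times> {c<..<d}) (x,y) \<partial>lborel)" .
  qed
  also have "\<dots> = (\<integral>\<^sup>+p. f p * indicator ({a<..<b} \<times> {c<..<d}) p \<partial>lborel)"
  proof (rule tonelli2(2))
    show "(\<lambda>p. f p * indicator ({a<..<b} \<times> {c<..<d}) p) \<in> borel_measurable borel"
      by (intro borel_measurable_times_ennreal f borel_measurable_indicator borel_open open_Times) auto
  qed
  also have "\<dots> \<le> ennreal E" by (rule E)
  finally have "k * (d - c) \<le> E" using E0 by simp
  then show False using k by simp
qed


context setting begin

lemma cont_px: "continuous_on D (part_x \<rho>)"
  using harm unfolding harmonic_on_def D_def
  by (intro continuous_at_imp_continuous_on) (auto intro: differentiable_imp_continuous_within)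

lemma cont_py: "continuous_on D (part_y \<rho>)"
  using harm unfolding harmonic_on_def D_def
  by (intro continuous_at_imp_continuous_on) (auto intro: differentiable_imp_continuous_within)

lemma cont_gs: "continuous_on D (grad_sq \<rho>)"
  unfolding grad_sq_def[abs_def] by (intro continuous_intros cont_px cont_py)

definition "Fg = (\<lambda>p. ennreal (indicator D p * grad_sq \<rho> p))"
definition "Etot = integral D (grad_sq \<rho>)"

lemma gs_nonneg: "grad_sq \<rho> p \<ge> 0" by (simp add: grad_sq_def)

lemma Fg_meas: "Fg \<in> borel_measurable borel"
proof -
  have "(\<lambda>p. indicator D p *\<^sub>R grad_sq \<rho> p) \<in> borel_measurable borel"
    by (intro borel_measurable_continuous_on_indicator cont_gs borel_open open_D)
  then show ?thesis unfolding Fg_def by simp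
qed

lemma Etot: "(\<integral>\<^sup>+p. Fg p \<partial>lborel) = ennreal Etot" "Etot \<ge> 0"
proof -
  have hi: "(grad_sq \<rho> has_integral Etot) D"
    using energy by (simp add: Etot_def D_def has_integral_integral)
  show "(\<integral>\<^sup>+p. Fg p \<partial>lborel) = ennreal Etot"
    unfolding Fg_def using nn_integral_has_integral_lebesgue[OF _ hi] gs_nonneg by simp
  show "Etot \<ge> 0" using has_integral_nonneg[OF hi] gs_nonneg by simp
qed

lemma Fg_sub: "(\<integral>\<^sup>+p. Fg p * indicator A p \<partial>lborel) \<le> ennreal Etot"
proof -
  have "(\<integral>\<^sup>+p. Fg p * indicator A p \<partial>lborel) \<le> (\<integral>\<^sup>+p. Fg p \<partial>lborel)"
    by (intro nn_integral_mono) (auto simp: indicator_def)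
  then show ?thesis using Etot by simp
qed

lemma line_y:
  assumes "\<forall>t\<in>{c<..<d}. (s,t) \<in> D"
  shows "(\<integral>\<^sup>+t. ennreal ((part_y \<rho> (s,t))\<^sup>2) * indicator {c<..<d} t \<partial>lborel)
       \<le> (\<integral>\<^sup>+t. Fg (s,t) * indicator {c<..<d} t \<partial>lborel)"
proof (intro nn_integral_mono)
  fix t
  show "ennreal ((part_y \<rho> (s,t))\<^sup>2) * indicator {c<..<d} t \<le> Fg (s,t) * indicator {c<..<d} t"
  proof (cases "t \<in> {c<..<d}")
    case True
    then have "(s,t) \<in> D" using assms by blast
    then show ?thesis using True by (simp add: Fg_def grad_sq_def)
  qed simp
qed

lemma line_x:
  assumes "\<forall>t\<in>{c<..<d}. (t,s) \<in> D"
  shows "(\<integral>\<^sup>+t. ennreal ((part_x \<rho> (t,s))\<^sup>2) * indicator {c<..<d} t \<partial>lborel)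
       \<le> (\<integral>\<^sup>+t. Fg (t,s) * indicator {c<..<d} t \<partial>lborel)"
proof (intro nn_integral_mono)
  fix t
  show "ennreal ((part_x \<rho> (t,s))\<^sup>2) * indicator {c<..<d} t \<le> Fg (t,s) * indicator {c<..<d} t"
  proof (cases "t \<in> {c<..<d}")
    case True
    then have "(t,s) \<in> D" using assms by blast
    then show ?thesis using True by (simp add: Fg_def grad_sq_def)
  qed simp
qed

lemma small_strip:
  assumes e: "e > 0" and t0: "\<tau>0 > 0"
  shows "\<exists>\<tau>. 0 < \<tau> \<and> \<tau> < \<tau>0 \<and> (\<integral>\<^sup>+p. Fg p * indicator ({0<..<2*\<tau>} \<times> UNIV) p \<partial>lborel) < ennreal e"
proof -
  define tn where "tn = (\<lambda>n::nat. \<tau>0 / (real n + 2))"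
  define fn where "fn = (\<lambda>n p. Fg p * indicator ({0<..<2 * tn n} \<times> UNIV) p)"
  have tnpos: "tn n > 0" for n using t0 by (simp add: tn_def)
  have tnlt: "tn n < \<tau>0" for n
  proof -
    have "\<tau>0 * 1 < \<tau>0 * (real n + 2)" using t0 by (intro mult_strict_left_mono) auto
    then show ?thesis by (simp add: tn_def divide_less_eq algebra_simps)
  qed
  have tnmono: "tn m \<le> tn n" if "n \<le> m" for n m
    using t0 that by (simp add: tn_def frac_le)
  have dec: "decseq fn"
  proof (rule decseq_SucI, rule le_funI)
    fix n p
    show "fn (Suc n) p \<le> fn n p" using tnmono[of n "Suc n"] by (auto simp: fn_def indicator_def)
  qed
  have meas: "fn i \<in> borel_measurable lborel" for i
    unfolding fn_def
    by (simp, intro borel_measurable_times_ennreal Fg_meas borel_measurable_indicator borel_open open_Times) auto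
  have fin: "(\<integral>\<^sup>+p. fn i p \<partial>lborel) < \<infinity>" for i
    using Fg_sub[of "{0<..<2 * tn i} \<times> UNIV"] unfolding fn_def by (simp add: le_less_trans)
  have inf0: "(INF n. fn n p) = 0" for p
  proof -
    have "\<exists>n. fn n p = 0"
    proof (cases "fst p > 0")
      case True
      obtain n where n: "2 * \<tau>0 / fst p < real n" using reals_Archimedean2 by blast
      then have "2 * \<tau>0 < real n * fst p" using True by (simp add: field_simps)
      also have "\<dots> < (real n + 2) * fst p" using True by (simp add: field_simps)
      finally have "2 * tn n < fst p" using True by (simp add: tn_def field_simps)
      then show ?thesis by (intro exI[of _ n]) (auto simp: fn_def indicator_def)
    next
      case False
      then show ?thesis by (intro exI[of _ 0]) (auto simp: fn_def indicator_def)
    qed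
    then obtain n where "fn n p = 0" by blast
    then have "(INF n. fn n p) \<le> 0" by (metis INF_lower UNIV_I)
    then show ?thesis by simp
  qed
  have "(\<integral>\<^sup>+p. (INF n. fn n p) \<partial>lborel) = (INF n. integral\<^sup>N lborel (fn n))"
    by (rule nn_integral_monotone_convergence_INF_decseq[OF dec meas fin])
  then have "(INF n. integral\<^sup>N lborel (fn n)) = 0" using inf0 by simp
  then have "(INF n. integral\<^sup>N lborel (fn n)) < ennreal e" using e by simp
  then obtain n where "integral\<^sup>N lborel (fn n) < ennreal e" by (auto simp: INF_less_iff)
  then show ?thesis using tnpos[of n] tnlt[of n] unfolding fn_def by blast
qed

end


context setting begin

lemma D_strip: "0 < x \<Longrightarrow> x < \<epsilon>/2 \<Longrightarrow> -T < y \<Longrightarrow> y < T \<Longrightarrow> (x,y) \<in> D"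
proof -
  assume a: "0 < x" "x < \<epsilon>/2" "-T < y" "y < T"
  have "1 < cx - x" using a by (simp add: cx_def)
  then have "1 < (cx - x)\<^sup>2" by (smt (verit) one_less_power pos2)
  then have "1 < (x - cx)\<^sup>2 + y\<^sup>2" by (smt (verit) power2_commute zero_le_power2)
  then show ?thesis using a D_iff by simp
qed

lemma D_right: "cx + 1 < x \<Longrightarrow> -T < y \<Longrightarrow> y < T \<Longrightarrow> (x,y) \<in> D"
proof -
  assume a: "cx + 1 < x" "-T < y" "y < T"
  have "1 < x - cx" using a by simp
  then have "1 < (x - cx)\<^sup>2" by (smt (verit) one_less_power pos2)
  then have "1 < (x - cx)\<^sup>2 + y\<^sup>2" by (smt (verit) zero_le_power2)
  moreover have "0 < x" using a cx_gt1 by simp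
  ultimately show ?thesis using a D_iff by simp
qed

lemma S_vert: "(x,y) \<in> D \<or> (0 < x \<and> (y = -T \<or> y = T)) \<Longrightarrow> (x,y) \<in> S"
  by (auto simp: S_iff)

lemma seg_cont_x: "\<forall>t\<in>A. (t,y) \<in> S \<Longrightarrow> continuous_on A (\<lambda>t. \<rho> (t,y))"
  by (rule continuous_on_compose2[OF cont_S, of _ "\<lambda>t. (t,y)"]) (auto intro!: continuous_intros)

lemma seg_cont_y: "\<forall>t\<in>A. (x,t) \<in> S \<Longrightarrow> continuous_on A (\<lambda>t. \<rho> (x,t))"
  by (rule continuous_on_compose2[OF cont_S, of _ "\<lambda>t. (x,t)"]) (auto intro!: continuous_intros)

lemma seg_cont_px: "\<forall>t\<in>A. (t,y) \<in> D \<Longrightarrow> continuous_on A (\<lambda>t. part_x \<rho> (t,y))"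
  by (rule continuous_on_compose2[OF cont_px, of _ "\<lambda>t. (t,y)"]) (auto intro!: continuous_intros)

lemma seg_cont_py: "\<forall>t\<in>A. (x,t) \<in> D \<Longrightarrow> continuous_on A (\<lambda>t. part_y \<rho> (x,t))"
  by (rule continuous_on_compose2[OF cont_py, of _ "\<lambda>t. (x,t)"]) (auto intro!: continuous_intros)

lemma horiz_bound:
  assumes ab: "a \<le> b" and cl: "\<forall>t\<in>{a..b}. (t,y) \<in> S" and op: "\<forall>t\<in>{a<..<b}. (t,y) \<in> D"
    and I: "(\<integral>\<^sup>+t. Fg (t,y) * indicator {a<..<b} t \<partial>lborel) \<le> ennreal M" and M0: "0 \<le> M"
    and uv: "a \<le> u" "u \<le> v" "v \<le> b"
  shows "\<bar>\<rho> (v,y) - \<rho> (u,y)\<bar> \<le> sqrt ((b-a)*M)"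
proof (rule L1D_sub[OF ab _ _ _ _ M0 uv, where g' = "\<lambda>t. part_x \<rho> (t,y)"])
  show "continuous_on {a..b} (\<lambda>t. \<rho> (t, y))" using cl by (rule seg_cont_x)
  show "\<forall>t\<in>{a<..<b}. ((\<lambda>t. \<rho> (t, y)) has_real_derivative part_x \<rho> (t, y)) (at t)"
    using op diffs(1) by blast
  show "continuous_on {a<..<b} (\<lambda>t. part_x \<rho> (t, y))" using op by (rule seg_cont_px)
  show "(\<integral>\<^sup>+t. ennreal ((part_x \<rho> (t,y))\<^sup>2) * indicator {a<..<b} t \<partial>lborel) \<le> ennreal M"
    using line_x[OF op] I by (rule order_trans)
qed

lemma vert_bound:
  assumes ab: "a \<le> b" and cl: "\<forall>t\<in>{a..b}. (x,t) \<in> S" and op: "\<forall>t\<in>{a<..<b}. (x,t) \<in> D"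
    and I: "(\<integral>\<^sup>+t. Fg (x,t) * indicator {a<..<b} t \<partial>lborel) \<le> ennreal M" and M0: "0 \<le> M"
    and uv: "a \<le> u" "u \<le> b" "a \<le> v" "v \<le> b"
  shows "\<bar>\<rho> (x,v) - \<rho> (x,u)\<bar> \<le> sqrt ((b-a)*M)"
proof -
  have main: "\<bar>\<rho> (x,v) - \<rho> (x,u)\<bar> \<le> sqrt ((b-a)*M)" if "a \<le> u" "u \<le> v" "v \<le> b" for u v
  proof (rule L1D_sub[OF ab _ _ _ _ M0 that, where g' = "\<lambda>t. part_y \<rho> (x,t)"])
    show "continuous_on {a..b} (\<lambda>t. \<rho> (x, t))" using cl by (rule seg_cont_y)
    show "\<forall>t\<in>{a<..<b}. ((\<lambda>t. \<rho> (x, t)) has_real_derivative part_y \<rho> (x, t)) (at t)"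
      using op diffs(2) by blast
    show "continuous_on {a<..<b} (\<lambda>t. part_y \<rho> (x, t))" using op by (rule seg_cont_py)
    show "(\<integral>\<^sup>+t. ennreal ((part_y \<rho> (x,t))\<^sup>2) * indicator {a<..<b} t \<partial>lborel) \<le> ennreal M"
      using line_y[OF op] I by (rule order_trans)
  qed
  show ?thesis
  proof (cases "u \<le> v")
    case True then show ?thesis using main uv by blast
  next
    case False then show ?thesis using main[of v u] uv by (simp add: abs_minus_commute)
  qed
qed

end


context setting begin

lemma sqrt4: "e \<ge> 0 \<Longrightarrow> sqrt (4 * e) = 2 * sqrt e"
  by (simp add: real_sqrt_mult)

lemma corner_gen:
  assumes t: "0 < \<tau>" "2*\<tau> < \<epsilon>/2" and c: "-T \<le> c" "c + 2*\<tau> \<le> T"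
    and c1: "c \<le> c1" "c1 + \<tau> \<le> c + 2*\<tau>"
    and e: "e > 0" and Eb: "(\<integral>\<^sup>+p. Fg p * indicator ({0<..<2*\<tau>} \<times> UNIV) p \<partial>lborel) < ennreal e"
  shows "\<exists>s\<in>{\<tau><..<2*\<tau>}. \<exists>y\<in>{c1<..<c1+\<tau>}. (\<forall>t\<in>{0..s}. \<bar>\<rho> (t,y)\<bar> \<le> 2 * sqrt e)
            \<and> (\<forall>t\<in>{c..c+2*\<tau>}. \<bar>\<rho> (s,t) - \<rho> (s,y)\<bar> \<le> 2 * sqrt e)"
proof -
  have sub: "(\<integral>\<^sup>+p. Fg p * indicator B p \<partial>lborel) \<le> ennreal e" if "B \<subseteq> {0<..<2*\<tau>} \<times> UNIV" for B
  proof -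
    have "(\<integral>\<^sup>+p. Fg p * indicator B p \<partial>lborel) \<le> (\<integral>\<^sup>+p. Fg p * indicator ({0<..<2*\<tau>} \<times> UNIV) p \<partial>lborel)"
      using that by (intro nn_integral_mono) (auto simp: indicator_def)
    then show ?thesis using Eb by simp
  qed
  have k: "e < (2*e/\<tau>) * ((c1+\<tau>) - c1)" "e < (2*e/\<tau>) * (2*\<tau> - \<tau>)" using e t by auto
  have b1: "(\<integral>\<^sup>+p. Fg p * indicator ({0<..<2*\<tau>} \<times> {c1<..<c1+\<tau>}) p \<partial>lborel) \<le> ennreal e"
    by (rule sub) auto
  obtain y where y: "y \<in> {c1<..<c1+\<tau>}" "(\<integral>\<^sup>+x. Fg (x,y) * indicator {0<..<2*\<tau>} x \<partial>lborel) \<le> ennreal (2*e/\<tau>)"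
    using avg_y[OF Fg_meas _ b1 _ k(1)] e t by auto
  have b2: "(\<integral>\<^sup>+p. Fg p * indicator ({\<tau><..<2*\<tau>} \<times> {c<..<c+2*\<tau>}) p \<partial>lborel) \<le> ennreal e"
    by (rule sub) (use t in auto)
  obtain s where s: "s \<in> {\<tau><..<2*\<tau>}" "(\<integral>\<^sup>+x. Fg (s,x) * indicator {c<..<c+2*\<tau>} x \<partial>lborel) \<le> ennreal (2*e/\<tau>)"
    using avg_x[OF Fg_meas _ b2 _ k(2)] e t by auto
  have yT: "-T < y" "y < T" using y c c1 t by auto
  have M0: "0 \<le> 2*e/\<tau>" using e t by simp
  have eq: "sqrt ((2*\<tau> - 0) * (2*e/\<tau>)) = 2 * sqrt e" "sqrt ((c + 2*\<tau> - c) * (2*e/\<tau>)) = 2 * sqrt e"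
    using t e sqrt4[of e] by (simp_all add: field_simps)
  have H: "\<bar>\<rho> (v,y) - \<rho> (0,y)\<bar> \<le> sqrt ((2*\<tau> - 0) * (2*e/\<tau>))" if "0 \<le> v" "v \<le> 2*\<tau>" for v
  proof (rule horiz_bound[OF _ _ _ y(2) M0])
    show "\<forall>t\<in>{0..2*\<tau>}. (t,y) \<in> S"
    proof
      fix t assume tt: "t \<in> {0..2*\<tau>}"
      show "(t,y) \<in> S"
      proof (cases "t = 0")
        case True then show ?thesis using yT by (simp add: S_iff)
      next
        case False then show ?thesis using tt t yT D_strip D_sub_S by auto
      qed
    qed
    show "\<forall>t\<in>{0<..<2*\<tau>}. (t,y) \<in> D" using t yT D_strip by auto
  qed (use that t in auto)
  have V: "\<bar>\<rho> (s,v) - \<rho> (s,y)\<bar> \<le> sqrt ((c + 2*\<tau> - c) * (2*e/\<tau>))" if "c \<le> v" "v \<le> c + 2*\<tau>" for v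
  proof (rule vert_bound[OF _ _ _ s(2) M0])
    show "\<forall>t\<in>{c..c + 2*\<tau>}. (s,t) \<in> S"
    proof
      fix u assume tt: "u \<in> {c..c + 2*\<tau>}"
      show "(s,u) \<in> S"
      proof (cases "u = -T \<or> u = T")
        case True then show ?thesis using s t by (intro S_vert) auto
      next
        case False then show ?thesis using tt t c s D_strip D_sub_S by auto
      qed
    qed
    show "\<forall>u\<in>{c<..<c + 2*\<tau>}. (s,u) \<in> D" using t c s D_strip by auto
  qed (use that y c1 t in auto)
  have r0: "\<rho> (0,y) = 0" using dir yT by simp
  show ?thesis
  proof (intro bexI conjI ballI)
    fix v assume "v \<in> {0..s}"
    then show "\<bar>\<rho> (v,y)\<bar> \<le> 2 * sqrt e" using H[of v] s r0 eq by auto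
  next
    fix v assume "v \<in> {c..c+2*\<tau>}"
    then show "\<bar>\<rho> (s,v) - \<rho> (s,y)\<bar> \<le> 2 * sqrt e" using V[of v] eq by auto
  qed (use s y in auto)
qed

end


context setting begin

lemma right_cut:
  assumes eta: "\<eta> > 0"
  shows "\<exists>L>M0. \<forall>y. -T \<le> y \<and> y \<le> T \<longrightarrow> \<rho> (L,y) \<ge> -\<eta>*L"
proof -
  have T1: "T > 1" by (rule T_gt1)
  define L0 where "L0 = cx + 2"
  have L0S: "(x,t) \<in> S" if "cx + 1 < x" "-T \<le> t" "t \<le> T" for x t
  proof (cases "t = -T \<or> t = T")
    case True then show ?thesis using that cx_gt1 by (intro S_vert) auto
  next
    case False then show ?thesis using that D_right D_sub_S by auto
  qed
  have "continuous_on {-T..T} (\<lambda>t. \<bar>\<rho> (L0,t)\<bar>)"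
    by (intro continuous_intros seg_cont_y) (use L0S in \<open>auto simp: L0_def\<close>)
  then obtain t0 where t0: "\<forall>t\<in>{-T..T}. \<bar>\<rho> (L0,t)\<bar> \<le> \<bar>\<rho> (L0,t0)\<bar>"
    using continuous_attains_sup[of "{-T..T}" "\<lambda>t. \<bar>\<rho> (L0,t)\<bar>"] T1 by fastforce
  define C0 where "C0 = \<bar>\<rho> (L0,t0)\<bar>"
  define k1 where "k1 = Etot + 1"
  define k2 where "k2 = (Etot + 1) / (2*T)"
  have E0: "Etot \<ge> 0" using Etot by simp
  have k1p: "k1 > 0" "k2 > 0" using E0 T1 by (auto simp: k1_def k2_def)
  define A where "A = C0 + sqrt ((T - -T) * k1)"
  define N where "N = max M0 (max L0 (max (2*A/\<eta>) (4*k2/\<eta>\<^sup>2)))"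
  have kk1: "Etot < k1 * ((N+1) - N)" by (simp add: k1_def)
  obtain L where L: "L \<in> {N<..<N+1}" "(\<integral>\<^sup>+t. Fg (L,t) * indicator {-T<..<T} t \<partial>lborel) \<le> ennreal k1"
    using avg_x[where c="-T" and d=T, OF Fg_meas _ Fg_sub _ kk1] E0 by auto
  have LL0: "L > L0" "L > M0" "L > 2*A/\<eta>" "L > 4*k2/\<eta>\<^sup>2" using L by (auto simp: N_def)
  have kk2: "Etot < k2 * (T - -T)" using T1 by (simp add: k2_def field_simps)
  obtain ys where ys: "ys \<in> {-T<..<T}" "(\<integral>\<^sup>+x. Fg (x,ys) * indicator {L0<..<L} x \<partial>lborel) \<le> ennreal k2"
    using avg_y[where a=L0 and b=L, OF Fg_meas _ Fg_sub _ kk2] E0 T1 by auto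
  have cxL0: "cx + 1 < L0" by (simp add: L0_def)
  have Vb: "\<bar>\<rho> (L,y) - \<rho> (L,ys)\<bar> \<le> sqrt ((T - -T) * k1)" if "-T \<le> y" "y \<le> T" for y
  proof (rule vert_bound[OF _ _ _ L(2)])
    show "\<forall>t\<in>{-T..T}. (L,t) \<in> S" using L0S LL0 cxL0 by auto
    show "\<forall>t\<in>{-T<..<T}. (L,t) \<in> D" using D_right LL0 cxL0 by auto
  qed (use that ys k1p T1 in auto)
  have Hb: "\<bar>\<rho> (L,ys) - \<rho> (L0,ys)\<bar> \<le> sqrt ((L - L0) * k2)"
  proof (rule horiz_bound[OF _ _ _ ys(2)])
    show "\<forall>t\<in>{L0..L}. (t,ys) \<in> S" using ys D_right cxL0 D_sub_S by fastforce
    show "\<forall>t\<in>{L0<..<L}. (t,ys) \<in> D" using ys D_right cxL0 by fastforce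
  qed (use LL0 k1p in auto)
  have "sqrt ((L - L0) * k2) \<le> sqrt (L * k2)"
    using LL0 k1p cxL0 cx_gt1 by (intro real_sqrt_le_mono mult_right_mono) auto
  also have "\<dots> \<le> \<eta> * L / 2"
  proof -
    have "4*k2 < L * \<eta>\<^sup>2" using LL0(4) eta by (simp add: field_simps)
    then have "L * k2 \<le> (\<eta> * L / 2)\<^sup>2" using LL0 cxL0 cx_gt1
      by (simp add: power2_eq_square field_simps)
    then have "sqrt (L * k2) \<le> sqrt ((\<eta> * L / 2)\<^sup>2)" by (rule real_sqrt_le_mono)
    also have "\<dots> = \<eta> * L / 2" using eta LL0 cxL0 cx_gt1 by simp
    finally show ?thesis .
  qed
  finally have s2: "sqrt ((L - L0) * k2) \<le> \<eta> * L / 2" .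
  have Aeta: "A \<le> \<eta> * L / 2" using LL0(3) eta by (simp add: field_simps)
  show ?thesis
  proof (intro exI[of _ L] conjI allI impI)
    show "L > M0" by (rule LL0)
    fix y assume yy: "-T \<le> y \<and> y \<le> T"
    have "\<bar>\<rho> (L0,ys)\<bar> \<le> C0" using t0 ys by (auto simp: C0_def)
    then show "\<rho> (L,y) \<ge> -\<eta>*L"
      using Vb[of y] yy Hb s2 Aeta by (simp add: A_def)
  qed
qed

end


lemma eps_lim:
  fixes a b Q :: real
  assumes h: "\<And>\<eta>. \<eta> > 0 \<Longrightarrow> a \<ge> b - \<eta> * Q" and Q: "Q \<ge> 0"
  shows "a \<ge> b"
proof (rule ccontr)
  assume "\<not> a \<ge> b"
  then have ab: "b - a > 0" by simp
  define \<eta> where "\<eta> = (b - a) / (Q + 1)"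
  have "\<eta> > 0" using ab Q by (simp add: \<eta>_def)
  have "\<eta> * Q < b - a"
  proof -
    have "(b - a) * Q < (b - a) * (Q + 1)" using ab by simp
    then show ?thesis using Q by (simp add: \<eta>_def field_simps)
  qed
  then show False using h[OF \<open>\<eta> > 0\<close>] by simp
qed

context setting begin

lemma weak_pos:
  assumes pD: "(px,py) \<in> D"
  shows "\<rho> (px,py) \<ge> 0"
proof -
  have T1: "T > 1" by (rule T_gt1)
  have pp: "px > 0" "-T < py" "py < T" using pD D_iff by auto
  have main: "\<rho> (px,py) \<ge> -\<alpha> - \<eta>1 * px" if al: "\<alpha> > 0" and e1: "\<eta>1 > 0" for \<alpha> \<eta>1
  proof -
    define e where "e = (\<alpha>/4)\<^sup>2"
    have e0: "e > 0" using al by (simp add: e_def)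
    have se: "4 * sqrt e = \<alpha>" using al by (simp add: e_def)
    define \<tau>0 where "\<tau>0 = min (px/2) (min (\<epsilon>/8) ((T-1)/2))"
    have t0: "\<tau>0 > 0" using pp eps T1 by (simp add: \<tau>0_def)
    obtain \<tau> where t: "0 < \<tau>" "\<tau> < \<tau>0"
      and Eb: "(\<integral>\<^sup>+p. Fg p * indicator ({0<..<2*\<tau>} \<times> UNIV) p \<partial>lborel) < ennreal e"
      using small_strip[OF e0 t0] by blast
    have tt: "2*\<tau> < \<epsilon>/2" "2*\<tau> < px" "2*\<tau> < T - 1" using t eps by (auto simp: \<tau>0_def)
    obtain s1 y1 where s1: "\<tau> < s1" "s1 < 2*\<tau>" and y1: "T - 2*\<tau> < y1" "y1 < T - \<tau>"
      and H1': "\<forall>t\<in>{0..s1}. \<bar>\<rho> (t,y1)\<bar> \<le> 2 * sqrt e"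
      and V1': "\<forall>t\<in>{T - 2*\<tau>..T}. \<bar>\<rho> (s1,t) - \<rho> (s1,y1)\<bar> \<le> 2 * sqrt e"
      using corner_gen[OF t(1) tt(1) _ _ _ _ e0 Eb, of "T - 2*\<tau>" "T - 2*\<tau>"] tt T1 t by auto
    have H1: "\<And>t. 0 \<le> t \<Longrightarrow> t \<le> s1 \<Longrightarrow> \<bar>\<rho> (t,y1)\<bar> \<le> 2 * sqrt e" using H1' by auto
    have V1: "\<And>t. T - 2*\<tau> \<le> t \<Longrightarrow> t \<le> T \<Longrightarrow> \<bar>\<rho> (s1,t) - \<rho> (s1,y1)\<bar> \<le> 2 * sqrt e" using V1' by auto
    have cg2: "\<exists>s\<in>{\<tau><..<2*\<tau>}. \<exists>y\<in>{-T + \<tau><..<-T + \<tau> + \<tau>}. (\<forall>t\<in>{0..s}. \<bar>\<rho> (t,y)\<bar> \<le> 2 * sqrt e)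
            \<and> (\<forall>t\<in>{-T..-T+2*\<tau>}. \<bar>\<rho> (s,t) - \<rho> (s,y)\<bar> \<le> 2 * sqrt e)"
      by (rule corner_gen[OF t(1) tt(1) _ _ _ _ e0 Eb]) (use tt T1 t in auto)
    then obtain s2 y2 where s2: "s2 \<in> {\<tau><..<2*\<tau>}" and y2': "y2 \<in> {-T + \<tau><..<-T + \<tau> + \<tau>}"
      and H2': "\<forall>t\<in>{0..s2}. \<bar>\<rho> (t,y2)\<bar> \<le> 2 * sqrt e"
      and V2': "\<forall>t\<in>{-T..-T+2*\<tau>}. \<bar>\<rho> (s2,t) - \<rho> (s2,y2)\<bar> \<le> 2 * sqrt e"
      by blast
    have y2: "-T + \<tau> < y2" "y2 < -T + 2*\<tau>" using y2' by auto
    have H2: "\<And>t. 0 \<le> t \<Longrightarrow> t \<le> s2 \<Longrightarrow> \<bar>\<rho> (t,y2)\<bar> \<le> 2 * sqrt e" using H2' by auto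
    have V2: "\<And>t. -T \<le> t \<Longrightarrow> t \<le> -T + 2*\<tau> \<Longrightarrow> \<bar>\<rho> (s2,t) - \<rho> (s2,y2)\<bar> \<le> 2 * sqrt e" using V2' by auto
    obtain L where L: "L > max px \<epsilon>" and R: "\<forall>y. -T \<le> y \<and> y \<le> T \<longrightarrow> \<rho> (L,y) \<ge> -\<eta>1*L"
      using right_cut[OF e1] by blast
    define h1 where "h1 = T - y1"
    define h2 where "h2 = y2 + T"
    have hh: "0 < h1" "h1 < T - 1" "0 < h2" "h2 < T - 1" using y1 y2 tt t by (auto simp: h1_def h2_def)
    have ss: "0 < s1" "s1 < \<epsilon>/2" "0 < s2" "s2 < \<epsilon>/2" using s1 s2 tt t by auto
    have LL: "px < L" "s1 < L" "s2 < L" using L ss eps by auto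
    have cut1: "\<rho> (x,y) \<ge> -\<alpha>" if "(x = s1 \<and> T - h1 \<le> y \<and> y \<le> T) \<or> (y = T - h1 \<and> 0 \<le> x \<and> x \<le> s1)" for x y
      using that
    proof
      assume a: "x = s1 \<and> T - h1 \<le> y \<and> y \<le> T"
      have "\<bar>\<rho> (s1,y) - \<rho> (s1,y1)\<bar> \<le> 2 * sqrt e" using V1 a y1 by (auto simp: h1_def)
      moreover have "\<bar>\<rho> (s1,y1)\<bar> \<le> 2 * sqrt e" using H1[of s1] s1 t by auto
      ultimately have "\<rho> (s1,y) \<ge> -\<alpha>" using se by linarith
      then show ?thesis using a by simp
    next
      assume a: "y = T - h1 \<and> 0 \<le> x \<and> x \<le> s1"
      then have "\<bar>\<rho> (x,y1)\<bar> \<le> 2 * sqrt e" using H1[of x] by auto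
      then show ?thesis using a se e0 by (simp add: h1_def)
    qed
    have cut2: "\<rho> (x,y) \<ge> -\<alpha>" if "(x = s2 \<and> -T \<le> y \<and> y \<le> -T + h2) \<or> (y = -T + h2 \<and> 0 \<le> x \<and> x \<le> s2)" for x y
      using that
    proof
      assume a: "x = s2 \<and> -T \<le> y \<and> y \<le> -T + h2"
      have "\<bar>\<rho> (s2,y) - \<rho> (s2,y2)\<bar> \<le> 2 * sqrt e" using V2 a y2 by (auto simp: h2_def)
      moreover have "\<bar>\<rho> (s2,y2)\<bar> \<le> 2 * sqrt e" using H2[of s2] s2 t by auto
      ultimately have "\<rho> (s2,y) \<ge> -\<alpha>" using se by linarith
      then show ?thesis using a by simp
    next
      assume a: "y = -T + h2 \<and> 0 \<le> x \<and> x \<le> s2"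
      then have "\<bar>\<rho> (x,y2)\<bar> \<le> 2 * sqrt e" using H2[of x] by (auto simp: h2_def)
      then show ?thesis using a se e0 by (simp add: h2_def)
    qed
    have right: "\<rho> (L,y) \<ge> -\<alpha> - \<eta>1 * L" if "-T \<le> y" "y \<le> T" for y
      using R that al by force
    have pK1: "s1 \<le> px \<or> py \<le> T - h1" using s1 tt by auto
    have pK2: "s2 \<le> px \<or> -T + h2 \<le> py" using s2 tt by auto
    have W: "\<rho> (px,py) \<ge> -\<alpha> - \<eta>1 * px - \<eta>2 * (py\<^sup>2 - 2*px\<^sup>2 + 2*L\<^sup>2)" if "\<eta>2 > 0" for \<eta>2
      by (rule weak_core[OF pD al e1 that ss(1,2) hh(1,2) ss(3,4) hh(3,4) LL pK1 pK2 cut1 cut2 right])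
    have Q: "py\<^sup>2 - 2*px\<^sup>2 + 2*L\<^sup>2 \<ge> 0"
    proof -
      have "px\<^sup>2 \<le> L\<^sup>2" using LL pp by (simp add: power_mono)
      then show ?thesis by (smt (verit) zero_le_power2)
    qed
    show ?thesis
      by (rule eps_lim[OF _ Q]) (use W in \<open>auto simp: algebra_simps\<close>)
  qed
  show ?thesis
  proof (rule ccontr)
    assume "\<not> ?thesis"
    then have neg: "- \<rho> (px,py) > 0" by simp
    define \<alpha> where "\<alpha> = - \<rho> (px,py) / 3"
    have ap: "\<alpha> > 0" using neg by (simp add: \<alpha>_def)
    have "\<alpha>/px > 0" using ap pp by simp
    from main[OF ap this] have "\<rho> (px,py) \<ge> -\<alpha> - (\<alpha>/px) * px" .
    then have "\<rho> (px,py) \<ge> -2*\<alpha>" using pp by simp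
    then show False using neg by (simp add: \<alpha>_def)
  qed
qed

end


lemma inv_deriv1:
  fixes c b x :: real
  assumes "(x - c)\<^sup>2 + b\<^sup>2 > 0"
  shows "((\<lambda>t. 1 / ((t - c)\<^sup>2 + b\<^sup>2)) has_real_derivative (-2*(x-c)/((x-c)\<^sup>2+b\<^sup>2)\<^sup>2)) (at x)"
  using assms
  by (auto intro!: derivative_eq_intros simp: power2_eq_square field_simps)

lemma alg2:
  fixes u b D :: real
  assumes "D \<noteq> 0" "D = u\<^sup>2 + b\<^sup>2"
  shows "(-2 * D\<^sup>2 - (2*D*(2*u)) * (-2*u)) / ((D\<^sup>2)^Suc (Suc 0)) = (6*u\<^sup>2 - 2*b\<^sup>2)/D^3"
proof -
  have "(-2 * D\<^sup>2 - (2*D*(2*u)) * (-2*u)) = D * (6*u\<^sup>2 - 2*b\<^sup>2)"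
    using assms(2) by (simp add: power2_eq_square algebra_simps)
  then show ?thesis using assms(1) by (simp add: power2_eq_square power3_eq_cube)
qed

lemma inv_deriv2:
  fixes c b x :: real
  assumes pos: "(x - c)\<^sup>2 + b\<^sup>2 > 0"
  shows "((\<lambda>t. -2*(t-c)/((t-c)\<^sup>2+b\<^sup>2)\<^sup>2) has_real_derivative ((6*(x-c)\<^sup>2 - 2*b\<^sup>2)/((x-c)\<^sup>2+b\<^sup>2)^3)) (at x)"
proof -
  have f: "((\<lambda>t. -2*(t-c)) has_real_derivative -2) (at x)"
    by (auto intro!: derivative_eq_intros)
  have g: "((\<lambda>t. ((t-c)\<^sup>2+b\<^sup>2)\<^sup>2) has_real_derivative (2*((x-c)\<^sup>2+b\<^sup>2)*(2*(x-c)))) (at x)"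
    by (auto intro!: derivative_eq_intros)
  have ne: "((x-c)\<^sup>2+b\<^sup>2)\<^sup>2 \<noteq> 0" using pos by (metis less_irrefl power_not_zero)
  have dq: "((\<lambda>t. -2*(t-c)/((t-c)\<^sup>2+b\<^sup>2)\<^sup>2) has_real_derivative
      ((-2) * ((x-c)\<^sup>2+b\<^sup>2)\<^sup>2 - (2*((x-c)\<^sup>2+b\<^sup>2)*(2*(x-c))) * (-2*(x-c))) / ((((x-c)\<^sup>2+b\<^sup>2)\<^sup>2)^Suc (Suc 0))) (at x)"
    by (rule DERIV_quotient[OF f g ne])
  have eq: "((-2) * ((x-c)\<^sup>2+b\<^sup>2)\<^sup>2 - (2*((x-c)\<^sup>2+b\<^sup>2)*(2*(x-c))) * (-2*(x-c))) / ((((x-c)\<^sup>2+b\<^sup>2)\<^sup>2)^Suc (Suc 0))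
      = (6*(x-c)\<^sup>2 - 2*b\<^sup>2)/((x-c)\<^sup>2+b\<^sup>2)^3"
    by (rule alg2) (use pos in auto)
  show ?thesis using dq unfolding eq .
qed

lemma inv_deriv1y:
  fixes c b x :: real
  assumes "b\<^sup>2 + (x - c)\<^sup>2 > 0"
  shows "((\<lambda>t. 1 / (b\<^sup>2 + (t - c)\<^sup>2)) has_real_derivative (-2*(x-c)/(b\<^sup>2 + (x-c)\<^sup>2)\<^sup>2)) (at x)"
  using inv_deriv1[of x c b] assms by (simp add: add.commute)

lemma inv_deriv2y:
  fixes c b x :: real
  assumes "b\<^sup>2 + (x - c)\<^sup>2 > 0"
  shows "((\<lambda>t. -2*(t-c)/(b\<^sup>2 + (t-c)\<^sup>2)\<^sup>2) has_real_derivative ((6*(x-c)\<^sup>2 - 2*b\<^sup>2)/(b\<^sup>2 + (x-c)\<^sup>2)^3)) (at x)"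
  using inv_deriv2[of x c b] assms by (simp add: add.commute)

context setting begin

lemma nonneg_S:
  assumes "(x,y) \<in> S" "x > 0"
  shows "\<rho> (x,y) \<ge> 0"
proof -
  have T1: "T > 1" by (rule T_gt1)
  define \<theta> where "\<theta> = (T - 1)/2"
  have th: "\<theta> > 0" "T - \<theta> > 1" using T1 by (auto simp: \<theta>_def field_simps)
  consider "(x,y) \<in> D" | "(x - cx)\<^sup>2 + y\<^sup>2 = 1" | "y = T" | "y = -T"
    using assms by (auto simp: S_iff)
  then show ?thesis
  proof cases
    case 1 then show ?thesis using weak_pos by simp
  next
    case 2 then show ?thesis using circ[of x y] by simp
  next
    case 3
    have inD: "(x,t) \<in> D" if "T - \<theta> \<le> t" "t < T" for t
    proof -
      have "1 < t" using that th by simp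
      then have "1 < t\<^sup>2" by (smt (verit) one_less_power pos2)
      then show ?thesis using that assms(2) th T1 D_iff by (smt (verit) zero_le_power2)
    qed
    have "continuous_on (closure {T - \<theta><..<T}) (\<lambda>t. \<rho> (x,t))"
    proof -
      have "\<forall>t\<in>{T - \<theta>..T}. (x,t) \<in> S"
      proof
        fix t assume tt: "t \<in> {T - \<theta>..T}"
        show "(x,t) \<in> S"
        proof (cases "t = T")
          case True then show ?thesis using assms(2) by (simp add: S_iff)
        next
          case False then show ?thesis using inD[of t] D_sub_S tt by auto
        qed
      qed
      then show ?thesis using th by (simp add: seg_cont_y)
    qed
    moreover have "T \<in> closure {T - \<theta><..<T}" using th by simp
    ultimately have "\<rho> (x,T) \<ge> 0"
      by (rule continuous_ge_on_closure) (auto intro!: weak_pos inD)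
    then show ?thesis using 3 by simp
  next
    case 4
    have inD: "(x,t) \<in> D" if "-T < t" "t \<le> -T + \<theta>" for t
    proof -
      have "1 < -t" using that th by simp
      then have "1 < (-t)\<^sup>2" by (smt (verit) one_less_power pos2)
      then show ?thesis using that assms(2) th T1 D_iff by (smt (verit) zero_le_power2 power2_minus)
    qed
    have "continuous_on (closure {-T<..<-T + \<theta>}) (\<lambda>t. \<rho> (x,t))"
    proof -
      have "\<forall>t\<in>{-T..-T + \<theta>}. (x,t) \<in> S"
      proof
        fix t assume tt: "t \<in> {-T..-T + \<theta>}"
        show "(x,t) \<in> S"
        proof (cases "t = -T")
          case True then show ?thesis using assms(2) by (simp add: S_iff)
        next
          case False then show ?thesis using inD[of t] D_sub_S tt by auto
        qed
      qed
      then show ?thesis using th by (simp add: seg_cont_y)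
    qed
    moreover have "-T \<in> closure {-T<..<-T + \<theta>}" using th by simp
    ultimately have "\<rho> (x,-T) \<ge> 0"
      by (rule continuous_ge_on_closure) (auto intro!: weak_pos inD)
    then show ?thesis using 4 by simp
  qed
qed

end


context setting begin

lemma annulus:
  fixes zx zy r0 R m px py :: real
  assumes z: "(zx,zy) \<in> D" and r: "0 < r0" "r0 < R" "R < zx" and m: "m > 0"
    and inner: "\<And>x y. (x-zx)\<^sup>2+(y-zy)\<^sup>2 = r0\<^sup>2 \<Longrightarrow> -T \<le> y \<Longrightarrow> y \<le> T \<Longrightarrow> 1 \<le> (x-cx)\<^sup>2+y\<^sup>2 \<Longrightarrow> \<rho> (x,y) \<ge> m"
    and circm: "\<And>x y. (x-cx)\<^sup>2+y\<^sup>2 = 1 \<Longrightarrow> \<rho> (x,y) \<ge> m"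
    and p: "(px,py) \<in> D" "r0\<^sup>2 < (px-zx)\<^sup>2+(py-zy)\<^sup>2" "(px-zx)\<^sup>2+(py-zy)\<^sup>2 < R\<^sup>2"
  shows "\<rho> (px,py) > 0"
proof -
  have T1: "T > 1" by (rule T_gt1)
  have zz: "-T < zy" "zy < T" "zx > 0" using z D_iff by auto
  define d2 where "d2 = (\<lambda>q::real\<times>real. (fst q - zx)\<^sup>2 + (snd q - zy)\<^sup>2)"
  have d2e: "d2 (x,y) = (x - zx)\<^sup>2 + (y - zy)\<^sup>2" for x y by (simp add: d2_def)
  have rr: "r0\<^sup>2 < R\<^sup>2" using r by (simp add: power_strict_mono)
  have r0p: "r0\<^sup>2 > 0" using r by simp
  have iv: "1/R\<^sup>2 < 1/r0\<^sup>2" using rr r0p by (simp add: frac_less2)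
  define X where "X = 1/r0\<^sup>2 - 1/R\<^sup>2"
  have Xp: "X > 0" using iv by (simp add: X_def)
  define A where "A = m / X"
  have Ap: "A > 0" using m Xp by (simp add: A_def)
  have AX: "A * X = m" using Xp by (simp add: A_def)
  define w where "w = (\<lambda>q. A * (1 / d2 q - 1/R\<^sup>2))"
  define V where "V = (\<lambda>q. \<rho> q - w q)"
  define K where "K = {q. r0\<^sup>2 \<le> d2 q \<and> d2 q \<le> R\<^sup>2 \<and> -T \<le> snd q \<and> snd q \<le> T \<and> 1 \<le> (fst q - cx)\<^sup>2 + (snd q)\<^sup>2}"
  have Kmem: "(x,y) \<in> K \<longleftrightarrow> r0\<^sup>2 \<le> d2 (x,y) \<and> d2 (x,y) \<le> R\<^sup>2 \<and> -T \<le> y \<and> y \<le> T \<and> 1 \<le> (x - cx)\<^sup>2 + y\<^sup>2" for x y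
    by (simp add: K_def)
  have Kx: "x > 0" if "(x,y) \<in> K" for x y
  proof (rule ccontr)
    assume "\<not> x > 0"
    then have "R < zx - x" using r by simp
    then have "R\<^sup>2 < (zx - x)\<^sup>2" using r by (intro power_strict_mono) auto
    then have "R\<^sup>2 < d2 (x,y)" by (simp add: d2e power2_commute) (smt (verit) zero_le_power2)
    then show False using that Kmem by simp
  qed
  have Kd: "d2 q > 0" if "q \<in> K" for q
  proof -
    have "r0\<^sup>2 \<le> d2 q" using that by (simp add: K_def)
    then show ?thesis using r0p by linarith
  qed
  have Kc: "compact K"
  proof -
    have "closed K" unfolding K_def d2_def
      by (intro closed_Collect_conj closed_Collect_le continuous_intros)
    moreover have "K \<subseteq> cbox (zx - R, -T) (zx + R, T)"
    proof
      fix q assume qK: "q \<in> K"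
      obtain x y where q: "q = (x,y)" by (cases q)
      have "(x - zx)\<^sup>2 \<le> R\<^sup>2" using qK q by (simp add: Kmem d2e) (smt (verit) zero_le_power2)
      then have "\<bar>x - zx\<bar> \<le> R" using r by (metis abs_le_square_iff abs_of_pos order.strict_trans)
      then show "q \<in> cbox (zx - R, -T) (zx + R, T)" using qK q by (auto simp: Kmem)
    qed
    then have "bounded K" using bounded_cbox bounded_subset by blast
    ultimately show ?thesis using compact_eq_bounded_closed by blast
  qed
  have KS: "K \<subseteq> S"
  proof
    fix q assume qK: "q \<in> K"
    obtain x y where q: "q = (x,y)" by (cases q)
    have k: "x > 0" "-T \<le> y" "y \<le> T" "1 \<le> (x - cx)\<^sup>2 + y\<^sup>2" using qK q Kx Kmem by auto
    have "(x,y) \<in> S"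
    proof (cases "(x - cx)\<^sup>2 + y\<^sup>2 = 1 \<or> y = T \<or> y = -T")
      case True then show ?thesis using k by (auto simp: S_iff)
    next
      case False then show ?thesis using k by (auto simp: S_iff D_iff)
    qed
    then show "q \<in> S" using q by simp
  qed
  have contV: "continuous_on K V"
  proof -
    have cd2: "continuous_on K d2" unfolding d2_def by (intro continuous_intros)
    have "continuous_on K w" unfolding w_def
      by (intro continuous_intros cd2) (auto dest: Kd)
    then show ?thesis unfolding V_def
      by (intro continuous_intros continuous_on_subset[OF cont_S KS])
  qed
  have wle: "w q \<le> m" if "q \<in> K" for q
  proof -
    have "r0\<^sup>2 \<le> d2 q" using that by (simp add: K_def)
    then have "1 / d2 q \<le> 1/r0\<^sup>2" using r0p Kd[OF that] by (intro divide_left_mono mult_pos_pos) auto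
    then have "A * (1 / d2 q - 1/R\<^sup>2) \<le> A * (1/r0\<^sup>2 - 1/R\<^sup>2)" using Ap by (intro mult_left_mono) auto
    also have "\<dots> = m" using AX by (simp add: X_def)
    finally show ?thesis by (simp add: w_def)
  qed
  have negeq: "0 - A * (-2*c/Q) = A * (2*c/Q)" for c Q :: real
    by (cases "Q = 0") (simp_all add: field_simps)
  have negeq2: "0 - A * (-2*(-a-b)/Q) = - (A * (2*(a+b)/Q))" for a b Q :: real
    by (cases "Q = 0") (simp_all add: field_simps)
  have key: "\<forall>q\<in>K. V q < 0 \<longrightarrow> (\<exists>z\<in>K. V z < V q)"
  proof (intro ballI impI)
    fix q assume qK: "q \<in> K" and Vq: "V q < 0"
    obtain x y where q: "q = (x,y)" by (cases q)
    have k: "r0\<^sup>2 \<le> d2 (x,y)" "d2 (x,y) \<le> R\<^sup>2" "-T \<le> y" "y \<le> T" "1 \<le> (x - cx)\<^sup>2 + y\<^sup>2" "x > 0"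
      using qK q Kmem Kx by auto
    have xyS: "(x,y) \<in> S" using KS qK q by blast
    have n1: "d2 (x,y) \<noteq> r0\<^sup>2"
    proof
      assume e: "d2 (x,y) = r0\<^sup>2"
      have "\<rho> (x,y) \<ge> m" using inner[of x y] e k by (simp add: d2e)
      moreover have "w (x,y) = m" using e AX by (simp add: w_def X_def)
      ultimately show False using Vq q by (simp add: V_def)
    qed
    have n2: "d2 (x,y) \<noteq> R\<^sup>2"
    proof
      assume e: "d2 (x,y) = R\<^sup>2"
      have "\<rho> (x,y) \<ge> 0" using nonneg_S[OF xyS k(6)] .
      moreover have "w (x,y) = 0" using e by (simp add: w_def)
      ultimately show False using Vq q by (simp add: V_def)
    qed
    have n3: "(x - cx)\<^sup>2 + y\<^sup>2 \<noteq> 1"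
    proof
      assume e: "(x - cx)\<^sup>2 + y\<^sup>2 = 1"
      have "\<rho> (x,y) \<ge> m" using circm[OF e] .
      moreover have "w (x,y) \<le> m" using wle qK q by simp
      ultimately show False using Vq q by (simp add: V_def)
    qed
    have dpos: "d2 (x,y) > 0" using Kd qK q by simp
    have lo: "r0\<^sup>2 < d2 (x,y)" "d2 (x,y) < R\<^sup>2" using k n1 n2 by auto
    define Oy where "Oy = {t. r0\<^sup>2 < (x - zx)\<^sup>2 + (t - zy)\<^sup>2 \<and> (x - zx)\<^sup>2 + (t - zy)\<^sup>2 < R\<^sup>2}"
    have oO: "open Oy" unfolding Oy_def by (intro open_Collect_conj open_Collect_less continuous_intros)
    have yO: "y \<in> Oy" using lo by (simp add: Oy_def d2e)
    obtain r1 where r1: "r1 > 0" "ball y r1 \<subseteq> Oy" using oO yO open_contains_ball by blast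
    define r2 where "r2 = min r1 (T - 1)"
    have r2: "r2 > 0" "r2 \<le> r1" "r2 \<le> T - 1" using r1 T1 by (auto simp: r2_def)
    have wy: "((\<lambda>t. w (x,t)) has_real_derivative A * (-2*(t0-zy)/((x-zx)\<^sup>2 + (t0-zy)\<^sup>2)\<^sup>2)) (at t0)"
      if "(x-zx)\<^sup>2 + (t0-zy)\<^sup>2 > 0" for t0
    proof -
      have "((\<lambda>t. A * (1 / ((x-zx)\<^sup>2 + (t-zy)\<^sup>2) - 1/R\<^sup>2)) has_real_derivative A * (-2*(t0-zy)/((x-zx)\<^sup>2 + (t0-zy)\<^sup>2)\<^sup>2 - 0)) (at t0)"
        by (intro DERIV_cmult DERIV_diff inv_deriv1y that DERIV_const)
      then show ?thesis by (simp add: w_def d2_def)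
    qed
    consider "y = T" | "y = -T" | "-T < y \<and> y < T" using k by linarith
    then show "\<exists>z\<in>K. V z < V q"
    proof cases
      case 1
      have dV: "((\<lambda>t. V (x,t)) has_real_derivative 0 - A * (-2*(T-zy)/((x-zx)\<^sup>2 + (T-zy)\<^sup>2)\<^sup>2)) (at_left T)"
        unfolding V_def
        by (intro DERIV_diff neu_top k(6) has_field_derivative_at_within[OF wy]) (use dpos 1 in \<open>simp add: d2e\<close>)
      have pD: "0 < 0 - A * (-2*(T-zy)/((x-zx)\<^sup>2 + (T-zy)\<^sup>2)\<^sup>2)"
      proof -
        have "(x-zx)\<^sup>2 + (T-zy)\<^sup>2 > 0" using dpos 1 by (simp add: d2e)
        then have "0 < 2*(T-zy)/((x-zx)\<^sup>2 + (T-zy)\<^sup>2)\<^sup>2" using zz by simp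
        then have "0 < A * (2*(T-zy)/((x-zx)\<^sup>2 + (T-zy)\<^sup>2)\<^sup>2)" using Ap by (intro mult_pos_pos)
        then show ?thesis by (simp only: negeq)
      qed
      obtain t where t: "T - r2 < t" "t < T" "V (x,t) < V (x,T)"
        using left_test[OF dV pD r2(1)] by auto
      have "t \<in> ball y r1" using t r2 1 by (auto simp: dist_real_def)
      then have tO: "t \<in> Oy" using r1 by blast
      have "1 < t" using t r2 by simp
      then have "1 < t\<^sup>2" by (smt (verit) one_less_power pos2)
      moreover have "0 \<le> (x - cx)\<^sup>2" by simp
      ultimately have c1: "1 \<le> (x - cx)\<^sup>2 + t\<^sup>2" by linarith
      have "r0\<^sup>2 < d2 (x,t)" "d2 (x,t) < R\<^sup>2" using tO by (simp_all add: Oy_def d2e)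
      moreover have "-T \<le> t" "t \<le> T" using t \<open>1 < t\<close> T1 by linarith+
      ultimately have "(x,t) \<in> K" using c1 Kmem by auto
      then show ?thesis using t q 1 by auto
    next
      case 2
      have dV: "((\<lambda>t. V (x,t)) has_real_derivative 0 - A * (-2*(-T-zy)/((x-zx)\<^sup>2 + (-T-zy)\<^sup>2)\<^sup>2)) (at_right (-T))"
        unfolding V_def
        by (intro DERIV_diff neu_bot k(6) has_field_derivative_at_within[OF wy]) (use dpos 2 in \<open>simp add: d2e\<close>)
      have nD: "0 - A * (-2*(-T-zy)/((x-zx)\<^sup>2 + (-T-zy)\<^sup>2)\<^sup>2) < 0"
      proof -
        have "(x-zx)\<^sup>2 + (-T-zy)\<^sup>2 > 0" using dpos 2 by (simp add: d2e)
        then have "0 < 2*(T+zy)/((x-zx)\<^sup>2 + (-T-zy)\<^sup>2)\<^sup>2" using zz by simp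
        then have "0 < A * (2*(T+zy)/((x-zx)\<^sup>2 + (-T-zy)\<^sup>2)\<^sup>2)" using Ap by (intro mult_pos_pos)
        moreover have "0 - A * (-2*(-T-zy)/((x-zx)\<^sup>2 + (-T-zy)\<^sup>2)\<^sup>2) = - (A * (2*(T+zy)/((x-zx)\<^sup>2 + (-T-zy)\<^sup>2)\<^sup>2))"
          by (rule negeq2)
        ultimately show ?thesis by (metis neg_less_0_iff_less)
      qed
      obtain t where t: "-T < t" "t < -T + r2" "V (x,t) < V (x,-T)"
        using right_test[OF dV nD r2(1)] by auto
      have "t \<in> ball y r1" using t r2 2 by (auto simp: dist_real_def)
      then have tO: "t \<in> Oy" using r1 by blast
      have "1 < -t" using t r2 by simp
      then have "1 < (-t)\<^sup>2" by (smt (verit) one_less_power pos2)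
      then have "1 < t\<^sup>2" by simp
      moreover have "0 \<le> (x - cx)\<^sup>2" by simp
      ultimately have c1: "1 \<le> (x - cx)\<^sup>2 + t\<^sup>2" by linarith
      have "r0\<^sup>2 < d2 (x,t)" "d2 (x,t) < R\<^sup>2" using tO by (simp_all add: Oy_def d2e)
      moreover have "-T \<le> t" "t \<le> T" using t \<open>1 < -t\<close> T1 by linarith+
      ultimately have "(x,t) \<in> K" using c1 Kmem by auto
      then show ?thesis using t q 2 by auto
    next
      case 3
      define U where "U = {q. r0\<^sup>2 < d2 q \<and> d2 q < R\<^sup>2 \<and> -T < snd q \<and> snd q < T \<and> 1 < (fst q - cx)\<^sup>2 + (snd q)\<^sup>2}"
      have oU: "open U" unfolding U_def d2_def
        by (intro open_Collect_conj open_Collect_less continuous_intros)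
      have qU: "q \<in> U" using q 3 lo n3 k by (auto simp: U_def)
      have UK: "U \<subseteq> K" by (auto simp: U_def K_def)
      have UD: "U \<subseteq> D"
      proof
        fix u assume uU: "u \<in> U"
        obtain a b where u: "u = (a,b)" by (cases u)
        have "a > 0" using Kx UK uU u by blast
        then show "u \<in> D" using uU u by (simp add: U_def D_iff)
      qed
      obtain r where r: "r > 0" "ball q r \<subseteq> U" using oU qU open_contains_ball by blast
      have qD: "(x,y) \<in> D" using UD qU q by blast
      have lap: "part_x (part_x \<rho>) (x,y) + part_y (part_y \<rho>) (x,y) = 0"
        using diffs(5)[OF qD] .
      have inx: "(t,y) \<in> U" if "t \<in> ball x r" for t
        using r that q by (auto simp: dist_Pair_Pair dist_real_def dist_commute intro!: subsetD[OF r(2)])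
      have iny: "(x,t) \<in> U" if "t \<in> ball y r" for t
        using r that q by (auto simp: dist_Pair_Pair dist_real_def dist_commute intro!: subsetD[OF r(2)])
      have Upos: "d2 u > 0" if "u \<in> U" for u using that UK Kd by blast
      define a where "a = x - zx"
      define b where "b = y - zy"
      have dab: "a\<^sup>2 + b\<^sup>2 > 0" using dpos by (simp add: d2e a_def b_def)
      define hx where "hx = part_x (part_x \<rho>) (x,y) - A * ((6*a\<^sup>2 - 2*b\<^sup>2)/(a\<^sup>2 + b\<^sup>2)^3)"
      define hy where "hy = part_y (part_y \<rho>) (x,y) - A * ((6*b\<^sup>2 - 2*a\<^sup>2)/(a\<^sup>2 + b\<^sup>2)^3)"
      define u where "u = (6*a\<^sup>2 - 2*b\<^sup>2)/(a\<^sup>2 + b\<^sup>2)^3"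
      define v where "v = (6*b\<^sup>2 - 2*a\<^sup>2)/(a\<^sup>2 + b\<^sup>2)^3"
      have se: "(6*a\<^sup>2 - 2*b\<^sup>2) + (6*b\<^sup>2 - 2*a\<^sup>2) = 4*(a\<^sup>2 + b\<^sup>2)" by simp
      have "u + v = ((6*a\<^sup>2 - 2*b\<^sup>2) + (6*b\<^sup>2 - 2*a\<^sup>2))/(a\<^sup>2 + b\<^sup>2)^3"
        unfolding u_def v_def by (rule add_divide_distrib[symmetric])
      then have uv: "u + v = 4*(a\<^sup>2 + b\<^sup>2)/(a\<^sup>2 + b\<^sup>2)^3" by (simp only: se)
      have "u + v > 0" unfolding uv using dab by (intro divide_pos_pos) auto
      then have Auv: "A * u + A * v > 0" using Ap by (simp add: distrib_left[symmetric])
      have "hx + hy = (part_x (part_x \<rho>) (x,y) + part_y (part_y \<rho>) (x,y)) - (A * u + A * v)"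
        unfolding hx_def hy_def u_def v_def by simp
      also have "\<dots> < 0" using lap Auv by simp
      finally have "hx + hy < 0" .
      then consider "hx < 0" | "hy < 0" by linarith
      then show ?thesis
      proof cases
        case 1
        have d1: "\<forall>t\<in>ball x r. ((\<lambda>t. V (t,y)) has_real_derivative
            (part_x \<rho> (t,y) - A * (-2*(t-zx)/((t-zx)\<^sup>2 + (y-zy)\<^sup>2)\<^sup>2))) (at t)"
        proof
          fix t assume tb: "t \<in> ball x r"
          then have tD: "(t,y) \<in> D" using inx UD by blast
          have tp: "(t-zx)\<^sup>2 + (y-zy)\<^sup>2 > 0" using Upos[OF inx[OF tb]] by (simp add: d2e)
          have "((\<lambda>t. \<rho> (t,y) - A * (1 / ((t-zx)\<^sup>2 + (y-zy)\<^sup>2) - 1/R\<^sup>2)) has_real_derivative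
              (part_x \<rho> (t,y) - A * (-2*(t-zx)/((t-zx)\<^sup>2 + (y-zy)\<^sup>2)\<^sup>2 - 0))) (at t)"
            by (intro DERIV_diff DERIV_cmult diffs(1)[OF tD] inv_deriv1 tp DERIV_const)
          then show "((\<lambda>t. V (t,y)) has_real_derivative
            (part_x \<rho> (t,y) - A * (-2*(t-zx)/((t-zx)\<^sup>2 + (y-zy)\<^sup>2)\<^sup>2))) (at t)"
            by (simp add: V_def w_def d2_def)
        qed
        have d2': "((\<lambda>t. part_x \<rho> (t,y) - A * (-2*(t-zx)/((t-zx)\<^sup>2 + (y-zy)\<^sup>2)\<^sup>2)) has_real_derivative hx) (at x)"
          unfolding hx_def a_def b_def
          by (intro DERIV_diff DERIV_cmult diffs(3)[OF qD] inv_deriv2) (use dab in \<open>simp add: a_def b_def\<close>)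
        obtain t where "t \<in> ball x r" "V (t,y) < V (x,y)"
          using second_test[OF r(1) d1 d2' 1] by blast
        then show ?thesis using inx UK q by blast
      next
        case 2
        have d1: "\<forall>t\<in>ball y r. ((\<lambda>t. V (x,t)) has_real_derivative
            (part_y \<rho> (x,t) - A * (-2*(t-zy)/((x-zx)\<^sup>2 + (t-zy)\<^sup>2)\<^sup>2))) (at t)"
        proof
          fix t assume tb: "t \<in> ball y r"
          then have tD: "(x,t) \<in> D" using iny UD by blast
          have tp: "(x-zx)\<^sup>2 + (t-zy)\<^sup>2 > 0" using Upos[OF iny[OF tb]] by (simp add: d2e)
          have "((\<lambda>t. \<rho> (x,t) - A * (1 / ((x-zx)\<^sup>2 + (t-zy)\<^sup>2) - 1/R\<^sup>2)) has_real_derivative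
              (part_y \<rho> (x,t) - A * (-2*(t-zy)/((x-zx)\<^sup>2 + (t-zy)\<^sup>2)\<^sup>2 - 0))) (at t)"
            by (intro DERIV_diff DERIV_cmult diffs(2)[OF tD] inv_deriv1y tp DERIV_const)
          then show "((\<lambda>t. V (x,t)) has_real_derivative
            (part_y \<rho> (x,t) - A * (-2*(t-zy)/((x-zx)\<^sup>2 + (t-zy)\<^sup>2)\<^sup>2))) (at t)"
            by (simp add: V_def w_def d2_def)
        qed
        have d2': "((\<lambda>t. part_y \<rho> (x,t) - A * (-2*(t-zy)/((x-zx)\<^sup>2 + (t-zy)\<^sup>2)\<^sup>2)) has_real_derivative hy) (at y)"
        proof -
          have "((\<lambda>t. part_y \<rho> (x,t) - A * (-2*(t-zy)/((x-zx)\<^sup>2 + (t-zy)\<^sup>2)\<^sup>2)) has_real_derivative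
              part_y (part_y \<rho>) (x,y) - A * ((6*(y-zy)\<^sup>2 - 2*(x-zx)\<^sup>2)/((x-zx)\<^sup>2 + (y-zy)\<^sup>2)^3)) (at y)"
            by (intro DERIV_diff DERIV_cmult diffs(4)[OF qD] inv_deriv2y) (use dab in \<open>simp add: a_def b_def add.commute\<close>)
          then show ?thesis by (simp add: hy_def a_def b_def add.commute)
        qed
        obtain t where "t \<in> ball y r" "V (x,t) < V (x,y)"
          using second_test[OF r(1) d1 d2' 2] by blast
        then show ?thesis using iny UK q by blast
      qed
    qed
  qed
  have pK: "(px,py) \<in> K"
  proof -
    have "-T < py" "py < T" "1 < (px - cx)\<^sup>2 + py\<^sup>2" using p D_iff by auto
    then show ?thesis using p by (simp add: Kmem d2e)
  qed
  have "V (px,py) \<ge> 0" using min_principle[OF Kc contV key] pK by blast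
  moreover have "w (px,py) > 0"
  proof -
    have dp: "d2 (px,py) > 0" using Kd pK by blast
    have "1/R\<^sup>2 < 1 / d2 (px,py)" using p dp by (simp add: d2e frac_less2)
    then show ?thesis using Ap by (simp add: w_def)
  qed
  ultimately show ?thesis by (simp add: V_def)
qed

end


context setting begin

lemma D_connected: "connected D"
proof -
  have T1: "T > 1" by (rule T_gt1)
  define ym where "ym = (1 + T)/2"
  have ym: "1 < ym" "ym < T" using T1 by (auto simp: ym_def)
  define A1 where "A1 = {0::real<..} \<times> {1<..<T}"
  define A2 where "A2 = {0::real<..} \<times> {-T<..< -1}"
  define A3 where "A3 = {0<..<\<epsilon>/2} \<times> {-T<..<T}"
  have cA: "connected A1" "connected A2" "connected A3" unfolding A1_def A2_def A3_def
    by (auto intro!: convex_connected convex_Times)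
  have sq1: "1 < t\<^sup>2" if "1 < \<bar>t\<bar>" for t :: real
  proof -
    have "1 < \<bar>t\<bar>\<^sup>2" using that by (smt (verit) one_less_power pos2)
    then show ?thesis by simp
  qed
  have A1D: "A1 \<subseteq> D"
  proof
    fix q assume "q \<in> A1"
    then obtain x y where q: "q = (x,y)" "x > 0" "1 < y" "y < T" by (auto simp: A1_def)
    have "1 < y\<^sup>2" using sq1[of y] q by simp
    moreover have "0 \<le> (x - cx)\<^sup>2" by simp
    ultimately have "1 < (x - cx)\<^sup>2 + y\<^sup>2" by linarith
    then show "q \<in> D" using q T1 by (simp add: D_iff)
  qed
  have A2D: "A2 \<subseteq> D"
  proof
    fix q assume "q \<in> A2"
    then obtain x y where q: "q = (x,y)" "x > 0" "-T < y" "y < -1" by (auto simp: A2_def)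
    have "1 < y\<^sup>2" using sq1[of y] q by simp
    moreover have "0 \<le> (x - cx)\<^sup>2" by simp
    ultimately have "1 < (x - cx)\<^sup>2 + y\<^sup>2" by linarith
    then show "q \<in> D" using q T1 by (simp add: D_iff)
  qed
  have A3D: "A3 \<subseteq> D" using D_strip by (auto simp: A3_def)
  define b where "b = (\<epsilon>/4, 0::real)"
  define C where "C = (\<lambda>p::real\<times>real. if snd p \<ge> 0
      then {fst p} \<times> {min (snd p) ym .. max (snd p) ym} \<union> A1 \<union> A3
      else {fst p} \<times> {min (snd p) (-ym) .. max (snd p) (-ym)} \<union> A2 \<union> A3)"
  have Cp: "p \<in> C p \<and> C p \<subseteq> D \<and> b \<in> C p \<and> connected (C p)" if pD: "p \<in> D" for p
  proof -
    obtain x y where p: "p = (x,y)" by (cases p)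
    have xy: "x > 0" "-T < y" "y < T" "1 < (x - cx)\<^sup>2 + y\<^sup>2" using pD p D_iff by auto
    have bA3: "b \<in> A3" using eps T1 by (simp add: b_def A3_def)
    show ?thesis
    proof (cases "y \<ge> 0")
      case True
      define I where "I = {x} \<times> {min y ym .. max y ym}"
      have CI: "C p = I \<union> A1 \<union> A3" using True p by (simp add: C_def I_def)
      have ID: "I \<subseteq> D"
      proof
        fix q assume "q \<in> I"
        then obtain t where q: "q = (x,t)" "min y ym \<le> t" "t \<le> max y ym" by (auto simp: I_def)
        have "1 < (x - cx)\<^sup>2 + t\<^sup>2"
        proof (cases "y \<le> ym")
          case True
          then have "y \<le> t" using q by simp
          then have "y\<^sup>2 \<le> t\<^sup>2" using \<open>y \<ge> 0\<close> by (simp add: power_mono)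
          then show ?thesis using xy by simp
        next
          case False
          then have "ym \<le> t" using q by simp
          then have "1 < t\<^sup>2" using sq1[of t] ym by simp
          moreover have "0 \<le> (x - cx)\<^sup>2" by simp
          ultimately show ?thesis by linarith
        qed
        moreover have "-T < t" "t < T" using q xy ym True by auto
        ultimately show "q \<in> D" using q xy by (simp add: D_iff)
      qed
      have cI: "connected I" unfolding I_def by (auto intro!: convex_connected convex_Times)
      have "connected (I \<union> A1)"
      proof (rule connected_Un[OF cI cA(1)])
        have "(x,ym) \<in> I" by (simp add: I_def)
        moreover have "(x,ym) \<in> A1" using xy ym by (simp add: A1_def)
        ultimately show "I \<inter> A1 \<noteq> {}" by blast
      qed
      moreover have "(\<epsilon>/4, ym) \<in> A1" "(\<epsilon>/4, ym) \<in> A3" using eps ym T1 by (auto simp: A1_def A3_def)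
      ultimately have "connected (I \<union> A1 \<union> A3)" using cA(3) by (intro connected_Un[of "I \<union> A1" A3]) auto
      moreover have "p \<in> I" using p by (simp add: I_def)
      ultimately show ?thesis using CI ID A1D A3D bA3 by auto
    next
      case False
      define I where "I = {x} \<times> {min y (-ym) .. max y (-ym)}"
      have CI: "C p = I \<union> A2 \<union> A3" using False p by (simp add: C_def I_def)
      have ID: "I \<subseteq> D"
      proof
        fix q assume "q \<in> I"
        then obtain t where q: "q = (x,t)" "min y (-ym) \<le> t" "t \<le> max y (-ym)" by (auto simp: I_def)
        have "1 < (x - cx)\<^sup>2 + t\<^sup>2"
        proof (cases "-ym \<le> y")
          case True
          then have "t \<le> y" using q by simp
          then have "(-y)\<^sup>2 \<le> (-t)\<^sup>2" using \<open>\<not> y \<ge> 0\<close> by (intro power_mono) auto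
          then have "y\<^sup>2 \<le> t\<^sup>2" by simp
          then show ?thesis using xy by simp
        next
          case False
          then have "t \<le> -ym" using q by simp
          then have "1 < t\<^sup>2" using sq1[of t] ym by simp
          moreover have "0 \<le> (x - cx)\<^sup>2" by simp
          ultimately show ?thesis by linarith
        qed
        moreover have "-T < t" "t < T" using q xy ym False by auto
        ultimately show "q \<in> D" using q xy by (simp add: D_iff)
      qed
      have cI: "connected I" unfolding I_def by (auto intro!: convex_connected convex_Times)
      have "connected (I \<union> A2)"
      proof (rule connected_Un[OF cI cA(2)])
        have "(x,-ym) \<in> I" by (simp add: I_def)
        moreover have "(x,-ym) \<in> A2" using xy ym by (simp add: A2_def)
        ultimately show "I \<inter> A2 \<noteq> {}" by blast
      qed
      moreover have "(\<epsilon>/4, -ym) \<in> A2" "(\<epsilon>/4, -ym) \<in> A3" using eps ym T1 by (auto simp: A2_def A3_def)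
      ultimately have "connected (I \<union> A2 \<union> A3)" using cA(3) by (intro connected_Un[of "I \<union> A2" A3]) auto
      moreover have "p \<in> I" using p by (simp add: I_def)
      ultimately show ?thesis using CI ID A2D A3D bA3 by auto
    qed
  qed
  have "D = \<Union>(C ` D)" using Cp by blast
  moreover have "connected (\<Union>(C ` D))"
  proof (rule connected_Union)
    show "\<And>s. s \<in> C ` D \<Longrightarrow> connected s" using Cp by blast
    show "\<Inter>(C ` D) \<noteq> {}" using Cp by blast
  qed
  ultimately show ?thesis by simp
qed

end


context setting begin

lemma circ_min: "\<exists>m>0. \<forall>x y. (x - cx)\<^sup>2 + y\<^sup>2 = 1 \<longrightarrow> \<rho> (x,y) \<ge> m"
proof -
  define C where "C = frontier (ball (cR0 \<epsilon>) (1::real))"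
  have cC: "compact C" unfolding C_def by (simp add: compact_frontier_bounded)
  have CS: "C \<subseteq> S" unfolding C_def S_def by blast
  have ne: "C \<noteq> {}" unfolding C_def by simp
  obtain q where q: "q \<in> C" "\<forall>y\<in>C. \<rho> q \<le> \<rho> y"
    using continuous_attains_inf[OF cC ne continuous_on_subset[OF cont_S CS]] by blast
  have "\<rho> q > 0" using q pos_circle by (simp add: C_def)
  moreover have "\<forall>x y. (x - cx)\<^sup>2 + y\<^sup>2 = 1 \<longrightarrow> \<rho> (x,y) \<ge> \<rho> q"
    using q sphere_iff by (auto simp: C_def)
  ultimately show ?thesis by blast
qed

lemma dist2: "(dist (x,y) (a,b))\<^sup>2 = (x - a)\<^sup>2 + (y - b)\<^sup>2"
  by (simp add: dist_Pair_Pair dist_real_def)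

lemma zero_open: "open {p\<in>D. \<rho> p = 0}"
proof (unfold open_contains_ball, intro ballI)
  fix p assume pZ: "p \<in> {p\<in>D. \<rho> p = 0}"
  obtain px py where p: "p = (px,py)" by (cases p)
  have pD: "p \<in> D" and rp: "\<rho> p = 0" using pZ by auto
  have px: "px > 0" using pD p D_iff by auto
  obtain e where e: "e > 0" "ball p e \<subseteq> D" using pD open_D open_contains_ball by blast
  define d0 where "d0 = min (e/3) (px/4)"
  have d0: "d0 > 0" "3*d0 \<le> e" "4*d0 \<le> px" using e px by (auto simp: d0_def)
  obtain m2 where m2: "m2 > 0" "\<forall>x y. (x - cx)\<^sup>2 + y\<^sup>2 = 1 \<longrightarrow> \<rho> (x,y) \<ge> m2" using circ_min by blast
  have "ball p d0 \<subseteq> {p\<in>D. \<rho> p = 0}"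
  proof
    fix z assume zb: "z \<in> ball p d0"
    obtain zx zy where z: "z = (zx,zy)" by (cases z)
    have zD: "z \<in> D" using zb e d0 by (auto simp: dist_commute)
    have "\<rho> z = 0"
    proof (cases "z = p")
      case True then show ?thesis using rp by simp
    next
      case False
      define d where "d = dist z p"
      have dd: "0 < d" "d < d0" using False zb by (auto simp: d_def dist_commute)
      define rn where "rn = (\<lambda>n::nat. (d/2) / real (Suc n))"
      have rn: "0 < rn n" "rn n < d" for n
      proof -
        show "0 < rn n" using dd by (simp add: rn_def)
        have "(d/2) / real (Suc n) \<le> d/2" using dd by (simp add: divide_le_eq)
        then show "rn n < d" unfolding rn_def using dd by linarith
      qed
      have zx: "zx > 2*d0"
      proof -
        have "\<bar>zx - px\<bar> \<le> dist z p" using z p by (simp add: dist_Pair_Pair dist_real_def real_sqrt_ge_abs1 abs_minus_commute)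
        then show ?thesis using dd d0 d_def by linarith
      qed
      have ex: "\<exists>\<zeta>. dist \<zeta> z = rn n \<and> \<rho> \<zeta> = 0" for n
      proof (rule ccontr)
        assume nex: "\<not> ?thesis"
        define sp where "sp = sphere z (rn n)"
        have spD: "sp \<subseteq> D"
        proof
          fix \<zeta> assume "\<zeta> \<in> sp"
          then have "dist \<zeta> z = rn n" by (simp add: sp_def dist_commute)
          then have "dist p \<zeta> < e" using dist_triangle[of p \<zeta> z] rn[of n] dd d0 d_def
            by (simp add: dist_commute)
          then show "\<zeta> \<in> D" using e by auto
        qed
        have spos: "\<rho> \<zeta> > 0" if "\<zeta> \<in> sp" for \<zeta>
        proof -
          obtain a b where ab: "\<zeta> = (a,b)" by (cases \<zeta>)
          have "\<rho> \<zeta> \<ge> 0" using weak_pos spD that ab by blast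
          moreover have "dist \<zeta> z = rn n" using that by (simp add: sp_def dist_commute)
          then have "\<rho> \<zeta> \<noteq> 0" using nex by blast
          ultimately show ?thesis by simp
        qed
        have spne: "sp \<noteq> {}" using rn[of n] by (simp add: sp_def)
        obtain q where q: "q \<in> sp" "\<forall>y\<in>sp. \<rho> q \<le> \<rho> y"
          using continuous_attains_inf[OF _ spne continuous_on_subset[OF cont_S]] spD D_sub_S
          by (metis compact_sphere sp_def order_trans)
        define m where "m = min (\<rho> q) m2"
        have mp: "m > 0" using spos[OF q(1)] m2 by (simp add: m_def)
        have "\<rho> p > 0"
          unfolding p
        proof (rule annulus)
          show "(zx,zy) \<in> D" using zD z by simp
          show "0 < rn n" by (rule rn)
          show "rn n < 2*d0" using rn[of n] dd by simp
          show "2*d0 < zx" by (rule zx)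
          show "0 < m" by (rule mp)
          fix x y
          show "m \<le> \<rho> (x,y)" if "(x - cx)\<^sup>2 + y\<^sup>2 = 1"
          proof -
            have "m2 \<le> \<rho> (x,y)" using m2(2) that by blast
            then show ?thesis by (simp add: m_def)
          qed
          show "m \<le> \<rho> (x,y)" if "(x-zx)\<^sup>2+(y-zy)\<^sup>2 = (rn n)\<^sup>2"
          proof -
            have "(dist (x,y) (zx,zy))\<^sup>2 = (rn n)\<^sup>2" using that by (simp add: dist2)
            then have "dist (x,y) (zx,zy) = rn n" using rn[of n]
              by (metis abs_of_nonneg power2_eq_iff_nonneg zero_le_dist less_imp_le)
            then have "(x,y) \<in> sp" using z by (simp add: sp_def dist_commute)
            then show ?thesis using q by (auto simp: m_def)
          qed
        next
          show "(px,py) \<in> D" using pD p by simp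
          have "(dist (px,py) (zx,zy))\<^sup>2 = (px-zx)\<^sup>2+(py-zy)\<^sup>2" by (rule dist2)
          moreover have "dist (px,py) (zx,zy) = d" using p z by (simp add: d_def dist_commute)
          ultimately have dq: "(px-zx)\<^sup>2+(py-zy)\<^sup>2 = d\<^sup>2" by simp
          show "(rn n)\<^sup>2 < (px-zx)\<^sup>2+(py-zy)\<^sup>2" unfolding dq using rn[of n]
            by (intro power_strict_mono) (auto simp: less_imp_le)
          show "(px-zx)\<^sup>2+(py-zy)\<^sup>2 < (2*d0)\<^sup>2" unfolding dq using dd
            by (intro power_strict_mono) auto
        qed
        then show False using rp by simp
      qed
      then obtain \<zeta> where \<zeta>: "\<And>n. dist (\<zeta> n) z = rn n \<and> \<rho> (\<zeta> n) = 0" by metis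
      have "rn \<longlonglongrightarrow> 0" unfolding rn_def using LIMSEQ_Suc[OF lim_const_over_n[of "d/2"]] by simp
      moreover have dz: "(\<lambda>n. dist (\<zeta> n) z) = rn" using \<zeta> by auto
      ultimately have "\<zeta> \<longlonglongrightarrow> z" unfolding tendsto_dist_iff[of \<zeta> z] by (simp only: dz)
      moreover have "isCont \<rho> z"
      proof -
        have cD: "continuous_on D \<rho>" by (rule continuous_on_subset[OF cont_S D_sub_S])
        show ?thesis using continuous_on_eq_continuous_at[OF open_D, of \<rho>] cD zD by blast
      qed
      ultimately have "(\<lambda>n. \<rho> (\<zeta> n)) \<longlonglongrightarrow> \<rho> z" by (rule isCont_tendsto_compose[rotated])
      moreover have "(\<lambda>n. \<rho> (\<zeta> n)) = (\<lambda>n. 0)" using \<zeta> by auto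
      ultimately show ?thesis using LIMSEQ_unique tendsto_const by metis
    qed
    then show "z \<in> {p\<in>D. \<rho> p = 0}" using zD by simp
  qed
  then show "\<exists>e>0. ball p e \<subseteq> {p\<in>D. \<rho> p = 0}" using d0 by blast
qed

lemma strong_pos:
  assumes "p \<in> D"
  shows "\<rho> p > 0"
proof -
  define Z where "Z = {p\<in>D. \<rho> p = 0}"
  have "openin (top_of_set D) Z"
    unfolding openin_open using zero_open by (intro exI[of _ Z]) (auto simp: Z_def)
  moreover have "closedin (top_of_set D) Z" unfolding Z_def
    by (rule continuous_closedin_preimage_constant[OF continuous_on_subset[OF cont_S D_sub_S]])
  ultimately have "Z = {} \<or> Z = D" using D_connected by (simp add: connected_clopen)
  moreover have "Z \<noteq> D"
  proof
    assume ZD: "Z = D"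
    have cl: "continuous_on (closure {cx+1<..<cx+2}) (\<lambda>t. \<rho> (t,0))"
    proof -
      have "\<forall>t\<in>{cx+1..cx+2}. (t,0) \<in> S"
      proof
        fix t assume t: "t \<in> {cx+1..cx+2}"
        show "(t,0) \<in> S"
        proof (cases "t = cx + 1")
          case True then show ?thesis by (simp add: S_iff)
        next
          case False then show ?thesis using t D_right T_gt1 D_sub_S by auto
        qed
      qed
      then show ?thesis by (simp add: seg_cont_x)
    qed
    have "\<rho> (cx+1, 0) \<le> 0"
    proof (rule continuous_le_on_closure[OF cl])
      show "cx + 1 \<in> closure {cx+1<..<cx+2}" by simp
      fix t assume "t \<in> {cx+1<..<cx+2}"
      then have "(t,0) \<in> D" using D_right T_gt1 by auto
      then have "(t,0) \<in> Z" using ZD by simp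
      then show "\<rho> (t,0) \<le> 0" by (simp add: Z_def)
    qed
    moreover have "\<rho> (cx+1, 0) > 0" using circ[of "cx+1" 0] by simp
    ultimately show False by simp
  qed
  ultimately have "Z = {}" by blast
  then have "p \<notin> Z" by simp
  then have "\<rho> p \<noteq> 0" using assms unfolding Z_def by blast
  moreover obtain a b where "p = (a,b)" by (cases p)
  then have "\<rho> p \<ge> 0" using weak_pos assms by simp
  ultimately show ?thesis by simp
qed

end

theorem lemma2p7:
  fixes \<epsilon> \<delta> :: real and \<rho> :: "real \<times> real \<Rightarrow> real"
  assumes eps: "\<epsilon> > 0" and del: "\<delta> > 0"
    and harm: "harmonic_on \<rho> (Omega_R \<delta> - closure (ball (cR0 \<epsilon>) 1))"
    and cont: "continuous_on ((Omega_R \<delta> - closure (ball (cR0 \<epsilon>) 1))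
                  \<union> ({0} \<times> {-1 - \<delta>/2 <..< 1 + \<delta>/2})
                  \<union> ({0<..} \<times> {-1 - \<delta>/2, 1 + \<delta>/2})
                  \<union> frontier (ball (cR0 \<epsilon>) 1)) \<rho>"
    and neumann: "\<forall>x>0. ((\<lambda>t. \<rho> (x, t)) has_real_derivative 0) (at_left (1 + \<delta>/2))
                      \<and> ((\<lambda>t. \<rho> (x, t)) has_real_derivative 0) (at_right (-1 - \<delta>/2))"
    and dirichlet: "\<forall>y\<in>{-1 - \<delta>/2 <..< 1 + \<delta>/2}. \<rho> (0, y) = 0"
    and pos_circle: "\<forall>p\<in>frontier (ball (cR0 \<epsilon>) 1). \<rho> p > 0"
    and energy: "grad_sq \<rho> integrable_on (Omega_R \<delta> - closure (ball (cR0 \<epsilon>) 1))"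
  shows "\<forall>p\<in>Omega_R \<delta> - closure (ball (cR0 \<epsilon>) 1). \<rho> p > 0"
proof -
  interpret setting \<epsilon> \<delta> \<rho>
    using assms by (unfold_locales) auto
  show ?thesis using strong_pos by (simp add: D_def)
qed


end
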